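(* Let $\mathbb{H}^2$ (curvature $-1$) be represented by the Beltrami–Klein model on the open unit disk $D$, and let $K\subset D$ be a compact convex set with nonempty interior. Then the hyperbolic perimeter of $K$ is $$\mathcal{P}=\frac12\int_0^{2\pi}w(\varphi)\,d\varphi,\qquad w(\varphi)=\cot\psi_1(\varphi)-\cot\psi_2(\varphi),$$ where $w(\varphi)$ is the Euclidean length of the projection of $K$ from $R(\varphi)$ onto the $\varphi$-normal, i.e. the Euclidean distance between the two points where the two support lines of $K$ through $R(\varphi)$ meet the $\varphi$-normal (extended as a full Euclidean line if necessary).
   Context: Beltrami–Klein model: $D$ with the Hilbert metric $h(P,Q)=\frac12\log\!\left(\frac{|AQ|}{|AP|}\frac{|BP|}{|BQ|}\right)$, where $A,B$ are the points where the Euclidean line $PQ$ meets the unit circle, in order $A,P,Q,B$; this is the hyperbolic plane of curvature $-1$ and the perimeter is the $h$-length of $\partial K$. For $\varphi\in[0,2\pi)$: $R(\varphi)=(\cos\varphi,\sin\varphi)$ (ideal point), $e(\varphi)=(-\sin\varphi,\cos\varphi)$, and the $\varphi$-normal is the Euclidean line $\{t\,e(\varphi):t\in\mathbb{R}\}$ through the origin perpendicular to $OR$. For $X\in D$ let $\psi_X(\varphi)\in(0,\pi)$ be the counterclockwise angle from $e(\varphi)$ to the direction of $X-R(\varphi)$; $\psi_1(\varphi)=\min_{X\in K}\psi_X(\varphi)$, $\psi_2(\varphi)=\max_{X\in K}\psi_X(\varphi)$. The line through $R(\varphi)$ at counterclockwise angle $\psi$ from $e(\varphi)$ meets the $\varphi$-normal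 at $t=\cot\psi$. *)

theory Defs
  imports "HOL-Analysis.Analysis"
begin

text \<open>The plane is identified with the complex numbers; the open unit disk is ball 0 1.\<close>

text \<open>Hilbert (Beltrami-Klein) metric. For P, Q in the disk with P \<noteq> Q, A and B are the
  points where the Euclidean line PQ meets the unit circle, in the order A, P, Q, B.\<close>
definition klein_A :: "complex \<Rightarrow> complex \<Rightarrow> complex" where
  "klein_A P Q = (THE A. norm A = 1 \<and> P \<in> closed_segment A Q)"

definition klein_B :: "complex \<Rightarrow> complex \<Rightarrow> complex" where
  "klein_B P Q = (THE B. norm B = 1 \<and> Q \<in> closed_segment P B)"

definition klein_dist :: "complex \<Rightarrow> complex \<Rightarrow> real" where
  "klein_dist P Q = (if P = Q then 0 else
     (1/2) * ln ((dist (klein_A P Q) Q / dist (klein_A P Q) P) *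
                 (dist (klein_B P Q) P / dist (klein_B P Q) Q)))"

definition klein_length :: "(real \<Rightarrow> complex) \<Rightarrow> ereal" where
  "klein_length g = (SUP (n, t) \<in> {(n :: nat, t :: nat \<Rightarrow> real).
        t 0 = 0 \<and> t n = 1 \<and> (\<forall>i<n. t i \<le> t (Suc i))}.
      ereal (\<Sum>i<n. klein_dist (g (t i)) (g (t (Suc i)))))"

definition Rpt :: "real \<Rightarrow> complex" where "Rpt \<phi> = cis \<phi>"
definition edir :: "real \<Rightarrow> complex" where "edir \<phi> = \<i> * cis \<phi>"

definition psiX :: "complex \<Rightarrow> real \<Rightarrow> real" where
  "psiX X \<phi> = Arg ((X - Rpt \<phi>) / edir \<phi>)"

definition psi1 :: "complex set \<Rightarrow> real \<Rightarrow> real" where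
  "psi1 K \<phi> = Inf ((\<lambda>X. psiX X \<phi>) ` K)"

definition psi2 :: "complex set \<Rightarrow> real \<Rightarrow> real" where
  "psi2 K \<phi> = Sup ((\<lambda>X. psiX X \<phi>) ` K)"

definition width_w :: "complex set \<Rightarrow> real \<Rightarrow> real" where
  "width_w K \<phi> = cot (psi1 K \<phi>) - cot (psi2 K \<phi>)"

end

theory Submission
  imports Defs
begin

definition pa :: "complex \<Rightarrow> real \<Rightarrow> real" where
  "pa X \<phi> = Re X * cos \<phi> + Im X * sin \<phi>"
definition pb :: "complex \<Rightarrow> real \<Rightarrow> real" where
  "pb X \<phi> = Im X * cos \<phi> - Re X * sin \<phi>"
definition pp :: "complex \<Rightarrow> real \<Rightarrow> real" where
  "pp X \<phi> = pb X \<phi> / (1 - pa X \<phi>)"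

lemma sc1: "sin (\<phi>::real) * sin \<phi> + cos \<phi> * cos \<phi> = 1"
  using sin_cos_squared_add[of \<phi>] by (simp add: power2_eq_square)

lemma cc1: "cos (\<phi>::real) * cos \<phi> = 1 - sin \<phi> * sin \<phi>"
  using sc1[of \<phi>] by linarith

lemma pa_sq: "(pa X \<phi>)\<^sup>2 + (pb X \<phi>)\<^sup>2 = (norm X)\<^sup>2"
proof -
  show ?thesis unfolding pa_def pb_def cmod_power2 by (simp add: power2_eq_square algebra_simps cc1)
qed

lemma pa_le: "\<bar>pa X \<phi>\<bar> \<le> norm X"
proof -
  have "(pa X \<phi>)\<^sup>2 \<le> (norm X)\<^sup>2" using pa_sq[of X \<phi>] zero_le_power2[of "pb X \<phi>"] by linarith
  then show ?thesis using abs_le_square_iff[of "pa X \<phi>" "norm X"] by simp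
qed
lemma pb_le: "\<bar>pb X \<phi>\<bar> \<le> norm X"
proof -
  have "(pb X \<phi>)\<^sup>2 \<le> (norm X)\<^sup>2" using pa_sq[of X \<phi>] zero_le_power2[of "pa X \<phi>"] by linarith
  then show ?thesis using abs_le_square_iff[of "pb X \<phi>" "norm X"] by simp
qed

lemma pa_lt1: "norm X < 1 \<Longrightarrow> 0 < 1 - pa X \<phi>"
  using pa_le[of X \<phi>] by linarith

lemma pa_add: "pa (X + Y) \<phi> = pa X \<phi> + pa Y \<phi>" and pb_add: "pb (X + Y) \<phi> = pb X \<phi> + pb Y \<phi>"
  by (simp_all add: pa_def pb_def algebra_simps)
lemma pa_diff: "pa (X - Y) \<phi> = pa X \<phi> - pa Y \<phi>" and pb_diff: "pb (X - Y) \<phi> = pb X \<phi> - pb Y \<phi>"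
  by (simp_all add: pa_def pb_def algebra_simps)
lemma pa_scale: "pa (of_real u * X) \<phi> = u * pa X \<phi>" and pb_scale: "pb (of_real u * X) \<phi> = u * pb X \<phi>"
  by (simp_all add: pa_def pb_def algebra_simps)
lemma pa_R: "pa (cis \<phi>) \<phi> = 1" and pb_R: "pb (cis \<phi>) \<phi> = 0"
  by (simp_all add: pa_def pb_def sc1 algebra_simps)

lemma psiX_eq: "psiX X \<phi> = Arg (Complex (pb X \<phi>) (1 - pa X \<phi>))"
proof -
  have c: "\<i> * cis \<phi> \<noteq> 0" by simp
  have "X - cis \<phi> = Complex (pb X \<phi>) (1 - pa X \<phi>) * (\<i> * cis \<phi>)"
    unfolding pa_def pb_def complex_eq_iff by (simp add: algebra_simps cc1)
  then have "(X - Rpt \<phi>) / edir \<phi> = Complex (pb X \<phi>) (1 - pa X \<phi>)"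
    unfolding Rpt_def edir_def using c by (simp add: divide_eq_eq)
  then show ?thesis by (simp add: psiX_def)
qed

lemma Arg_cot: assumes "0 < Im z" shows "cot (Arg z) = Re z / Im z" "0 < Arg z" "Arg z < pi"
proof -
  have z: "z \<noteq> 0" using assms by auto
  have "cis (Arg z) = sgn z" using cis_Arg[OF z] .
  then have "cos (Arg z) = Re z / norm z" "sin (Arg z) = Im z / norm z"
    by (metis Re_sgn cis.sel(1), metis Im_sgn cis.sel(2))
  then show "cot (Arg z) = Re z / Im z" using z by (simp add: cot_def)
  show "0 < Arg z" "Arg z < pi" using Arg_lt_pi assms by auto
qed

lemma psiX_props: assumes "norm X < 1"
  shows "cot (psiX X \<phi>) = pp X \<phi>" "0 < psiX X \<phi>" "psiX X \<phi> < pi"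
  using Arg_cot[of "Complex (pb X \<phi>) (1 - pa X \<phi>)"] pa_lt1[OF assms, of \<phi>]
  by (auto simp: psiX_eq pp_def)

lemma cot_less: assumes "0 < a" "a < b" "b < pi" shows "cot b < cot a"
proof -
  have sa: "sin a > 0" "sin b > 0" using assms by (auto intro!: sin_gt_zero)
  have "sin (b - a) > 0" using assms by (auto intro!: sin_gt_zero)
  then have "cos a * sin b - cos b * sin a > 0" by (simp add: sin_diff algebra_simps)
  then show ?thesis using sa by (simp add: cot_def field_simps)
qed

lemma pp_cont: "continuous_on (ball 0 1) (\<lambda>X. pp X \<phi>)"
proof -
  have a: "continuous_on (ball 0 1) (\<lambda>X. pb X \<phi>)" unfolding pb_def by (intro continuous_intros)
  have b: "continuous_on (ball 0 1) (\<lambda>X. 1 - pa X \<phi>)" unfolding pa_def by (intro continuous_intros)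
  have c: "\<forall>X\<in>ball 0 1. 1 - pa X \<phi> \<noteq> 0"
  proof
    fix X :: complex assume "X \<in> ball 0 1"
    then have "norm X < 1" by simp
    from pa_lt1[OF this, of \<phi>] show "1 - pa X \<phi> \<noteq> 0" by simp
  qed
  show ?thesis unfolding pp_def by (rule continuous_on_divide[OF a b c])
qed

lemma pp_cont_on: "S \<subseteq> ball 0 1 \<Longrightarrow> continuous_on S (\<lambda>X. pp X \<phi>)"
  using pp_cont continuous_on_subset by blast

lemma width_char:
  assumes K: "K \<subseteq> ball 0 1" "compact K" "K \<noteq> {}"
  shows "\<exists>X1\<in>K. \<exists>X2\<in>K. (\<forall>X\<in>K. pp X \<phi> \<le> pp X1 \<phi> \<and> pp X2 \<phi> \<le> pp X \<phi>)
           \<and> width_w K \<phi> = pp X1 \<phi> - pp X2 \<phi>"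
proof -
  have ct: "continuous_on K (\<lambda>X. pp X \<phi>)" using pp_cont_on K by blast
  obtain X1 where X1: "X1 \<in> K" "\<forall>Y\<in>K. pp Y \<phi> \<le> pp X1 \<phi>"
    using continuous_attains_sup[OF K(2,3) ct] by blast
  obtain X2 where X2: "X2 \<in> K" "\<forall>Y\<in>K. pp X2 \<phi> \<le> pp Y \<phi>"
    using continuous_attains_inf[OF K(2,3) ct] by blast
  have nK: "\<And>X. X \<in> K \<Longrightarrow> norm X < 1" using K(1) by auto
  have p1: "psi1 K \<phi> = psiX X1 \<phi>"
    unfolding psi1_def
  proof (rule cInf_eq_minimum)
    show "psiX X1 \<phi> \<in> (\<lambda>X. psiX X \<phi>) ` K" using X1 by auto
    fix x assume "x \<in> (\<lambda>X. psiX X \<phi>) ` K"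
    then obtain X where X: "X \<in> K" "x = psiX X \<phi>" by auto
    show "psiX X1 \<phi> \<le> x"
    proof (rule ccontr)
      assume "\<not> psiX X1 \<phi> \<le> x"
      then have "cot (psiX X1 \<phi>) < cot (psiX X \<phi>)"
        using cot_less[of "psiX X \<phi>" "psiX X1 \<phi>"] psiX_props[OF nK[OF X(1)]] psiX_props[OF nK[OF X1(1)]] X
        by auto
      then have "pp X1 \<phi> < pp X \<phi>" using psiX_props[OF nK[OF X(1)]] psiX_props[OF nK[OF X1(1)]] by simp
      then show False using X1 X by force
    qed
  qed
  have p2: "psi2 K \<phi> = psiX X2 \<phi>"
    unfolding psi2_def
  proof (rule cSup_eq_maximum)
    show "psiX X2 \<phi> \<in> (\<lambda>X. psiX X \<phi>) ` K" using X2 by auto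
    fix x assume "x \<in> (\<lambda>X. psiX X \<phi>) ` K"
    then obtain X where X: "X \<in> K" "x = psiX X \<phi>" by auto
    show "x \<le> psiX X2 \<phi>"
    proof (rule ccontr)
      assume "\<not> x \<le> psiX X2 \<phi>"
      then have "cot (psiX X \<phi>) < cot (psiX X2 \<phi>)"
        using cot_less[of "psiX X2 \<phi>" "psiX X \<phi>"] psiX_props[OF nK[OF X(1)]] psiX_props[OF nK[OF X2(1)]] X
        by auto
      then have "pp X \<phi> < pp X2 \<phi>" using psiX_props[OF nK[OF X(1)]] psiX_props[OF nK[OF X2(1)]] by simp
      then show False using X2 X by force
    qed
  qed
  have "width_w K \<phi> = pp X1 \<phi> - pp X2 \<phi>"
    unfolding width_w_def p1 p2 using psiX_props[OF nK[OF X1(1)]] psiX_props[OF nK[OF X2(1)]] by simp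
  then show ?thesis using X1 X2 by blast
qed

lemma pp_lip:
  assumes "norm X \<le> r" "norm Y \<le> r" "r < 1"
  shows "\<bar>pp X \<phi> - pp Y \<phi>\<bar> \<le> 3 * norm (X - Y) / (1 - r)\<^sup>2"
proof -
  define dX where "dX = 1 - pa X \<phi>"
  define dY where "dY = 1 - pa Y \<phi>"
  have dX: "1 - r \<le> dX" "dX \<le> 1 + r" unfolding dX_def using pa_le[of X \<phi>] assms by auto
  have dY: "1 - r \<le> dY" "dY \<le> 1 + r" unfolding dY_def using pa_le[of Y \<phi>] assms by auto
  have r0: "0 \<le> r" using assms norm_ge_zero[of X] by linarith
  have pos: "0 < 1 - r" using assms by simp
  have eq: "pp X \<phi> - pp Y \<phi> = ((pb X \<phi> - pb Y \<phi>) * dY + pb Y \<phi> * (pa X \<phi> - pa Y \<phi>)) / (dX * dY)"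
    unfolding pp_def dX_def[symmetric] dY_def[symmetric] using dX dY pos
    by (simp add: field_simps dX_def dY_def)
  have n1: "\<bar>pb X \<phi> - pb Y \<phi>\<bar> \<le> norm (X - Y)" using pb_le[of "X - Y" \<phi>] by (simp add: pb_diff)
  have n2: "\<bar>pa X \<phi> - pa Y \<phi>\<bar> \<le> norm (X - Y)" using pa_le[of "X - Y" \<phi>] by (simp add: pa_diff)
  have n3: "\<bar>pb Y \<phi>\<bar> \<le> r" using pb_le[of Y \<phi>] assms by linarith
  have "\<bar>(pb X \<phi> - pb Y \<phi>) * dY\<bar> \<le> norm (X - Y) * 2"
    using n1 dY r0 assms by (simp add: abs_mult) (rule mult_mono, auto)
  moreover have "\<bar>pb Y \<phi>\<bar> * \<bar>pa X \<phi> - pa Y \<phi>\<bar> \<le> 1 * norm (X - Y)"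
    using n2 n3 assms by (intro mult_mono) auto
  then have "\<bar>pb Y \<phi> * (pa X \<phi> - pa Y \<phi>)\<bar> \<le> 1 * norm (X - Y)" by (simp add: abs_mult)
  ultimately have num: "\<bar>(pb X \<phi> - pb Y \<phi>) * dY + pb Y \<phi> * (pa X \<phi> - pa Y \<phi>)\<bar> \<le> 3 * norm (X - Y)"
    by linarith
  have den: "(1 - r)\<^sup>2 \<le> dX * dY" unfolding power2_eq_square using dX dY pos
    by (intro mult_mono) auto
  have "\<bar>pp X \<phi> - pp Y \<phi>\<bar> = \<bar>(pb X \<phi> - pb Y \<phi>) * dY + pb Y \<phi> * (pa X \<phi> - pa Y \<phi>)\<bar> / (dX * dY)"
    using eq dX dY pos by (simp add: abs_div abs_mult)
  also have "\<dots> \<le> 3 * norm (X - Y) / (dX * dY)"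
    using num dX dY pos by (intro divide_right_mono) auto
  also have "\<dots> \<le> 3 * norm (X - Y) / (1 - r)\<^sup>2"
  proof (rule divide_left_mono)
    show "0 < dX * dY * (1 - r)\<^sup>2" using dX dY pos by (intro mult_pos_pos) auto
  qed (use den pos in auto)
  finally show ?thesis .
qed

lemma pa_deriv: "((\<lambda>\<phi>. pa X \<phi>) has_real_derivative pb X \<phi>) (at \<phi>)"
  unfolding pa_def pb_def by (auto intro!: derivative_eq_intros simp: algebra_simps)
lemma pb_deriv: "((\<lambda>\<phi>. pb X \<phi>) has_real_derivative - pa X \<phi>) (at \<phi>)"
  unfolding pa_def pb_def by (auto intro!: derivative_eq_intros simp: algebra_simps)

lemma pp_deriv: assumes "norm X < 1"
  shows "((\<lambda>\<phi>. pp X \<phi>) has_real_derivative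
     ((- pa X \<phi>) * (1 - pa X \<phi>) + pb X \<phi> * pb X \<phi>) / ((1 - pa X \<phi>) * (1 - pa X \<phi>))) (at \<phi>)"
proof -
  have d: "((\<lambda>\<phi>. 1 - pa X \<phi>) has_real_derivative 0 - pb X \<phi>) (at \<phi>)"
    by (intro DERIV_diff DERIV_const pa_deriv)
  have "((\<lambda>\<phi>. pb X \<phi> / (1 - pa X \<phi>)) has_real_derivative
     ((- pa X \<phi>) * (1 - pa X \<phi>) - pb X \<phi> * (0 - pb X \<phi>)) / ((1 - pa X \<phi>) * (1 - pa X \<phi>))) (at \<phi>)"
    using pa_lt1[OF assms, of \<phi>] by (intro DERIV_divide pb_deriv d) auto
  then show ?thesis unfolding pp_def by simp
qed

lemma ln_deriv: assumes "norm X < 1"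
  shows "((\<lambda>\<phi>. ln (1 - pa X \<phi>)) has_real_derivative - pp X \<phi>) (at \<phi>)"
proof -
  have d: "((\<lambda>\<phi>. 1 - pa X \<phi>) has_real_derivative 0 - pb X \<phi>) (at \<phi>)"
    by (intro DERIV_diff DERIV_const pa_deriv)
  have "((\<lambda>\<phi>. ln (1 - pa X \<phi>)) has_real_derivative 1 / (1 - pa X \<phi>) * (0 - pb X \<phi>)) (at \<phi>)"
    by (rule DERIV_chain2[OF DERIV_ln_divide d]) (use pa_lt1[OF assms] in auto)
  then show ?thesis by (simp add: pp_def)
qed

lemma pp_lip_phi:
  assumes "norm X \<le> r" "r < 1"
  shows "\<bar>pp X \<phi> - pp X \<psi>\<bar> \<le> 3 / (1 - r)\<^sup>2 * \<bar>\<phi> - \<psi>\<bar>"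
proof -
  have nX: "norm X < 1" using assms by linarith
  have r0: "0 \<le> r" using assms norm_ge_zero[of X] by linarith
  have pos: "0 < 1 - r" using assms by simp
  define D where "D \<theta> = ((- pa X \<theta>) * (1 - pa X \<theta>) + pb X \<theta> * pb X \<theta>) / ((1 - pa X \<theta>) * (1 - pa X \<theta>))" for \<theta>
  have Dd: "\<And>\<theta>. ((\<lambda>\<phi>. pp X \<phi>) has_real_derivative D \<theta>) (at \<theta>)"
    unfolding D_def by (rule pp_deriv[OF nX])
  have Db: "\<bar>D \<theta>\<bar> \<le> 3 / (1 - r)\<^sup>2" for \<theta>
  proof -
    define d where "d = 1 - pa X \<theta>"
    have d: "1 - r \<le> d" "d \<le> 1 + r" unfolding d_def using pa_le[of X \<theta>] assms by auto
    have a: "\<bar>pa X \<theta>\<bar> \<le> r" "\<bar>pb X \<theta>\<bar> \<le> r" using pa_le[of X \<theta>] pb_le[of X \<theta>] assms by auto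
    have "\<bar>pa X \<theta>\<bar> * d \<le> 1 * 2" using a d r0 assms by (intro mult_mono) auto
    then have "\<bar>(- pa X \<theta>) * d\<bar> \<le> 1 * 2" using d pos by (simp add: abs_mult)
    moreover have "\<bar>pb X \<theta>\<bar> * \<bar>pb X \<theta>\<bar> \<le> 1 * 1" using a assms by (intro mult_mono) auto
    then have "\<bar>pb X \<theta> * pb X \<theta>\<bar> \<le> 1 * 1" by (simp add: abs_mult)
    ultimately have num: "\<bar>(- pa X \<theta>) * d + pb X \<theta> * pb X \<theta>\<bar> \<le> 3" by linarith
    have den: "(1 - r)\<^sup>2 \<le> d * d" unfolding power2_eq_square using d pos by (intro mult_mono) auto
    have "\<bar>D \<theta>\<bar> = \<bar>(- pa X \<theta>) * d + pb X \<theta> * pb X \<theta>\<bar> / (d * d)"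
      unfolding D_def d_def[symmetric] by (simp add: abs_div abs_mult)
    also have "\<dots> \<le> 3 / (d * d)" using num d pos by (intro divide_right_mono) auto
    also have "\<dots> \<le> 3 / (1 - r)\<^sup>2"
    proof (rule divide_left_mono)
      show "0 < d * d * (1 - r)\<^sup>2" using d pos by (intro mult_pos_pos) auto
    qed (use den pos in auto)
    finally show ?thesis .
  qed
  have main: "\<bar>pp X b - pp X a\<bar> \<le> 3 / (1 - r)\<^sup>2 * \<bar>b - a\<bar>" if "a < b" for a b
  proof -
    have "\<exists>z. a < z \<and> z < b \<and> pp X b - pp X a = (b - a) * D z"
      using MVT2[OF that, of "\<lambda>\<phi>. pp X \<phi>" D] Dd by blast
    then obtain z where "a < z" "z < b" "pp X b - pp X a = (b - a) * D z" by blast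
    then have "\<bar>pp X b - pp X a\<bar> = \<bar>b - a\<bar> * \<bar>D z\<bar>" by (simp add: abs_mult)
    also have "\<dots> \<le> \<bar>b - a\<bar> * (3 / (1 - r)\<^sup>2)" by (intro mult_left_mono Db) auto
    finally show ?thesis by (simp add: mult.commute)
  qed
  show ?thesis
  proof (cases "\<phi> < \<psi>")
    case True then show ?thesis using main[OF True] by (simp add: abs_minus_commute)
  next
    case False
    show ?thesis
    proof (cases "\<psi> < \<phi>")
      case True then show ?thesis using main[OF True] by simp
    next
      case False then show ?thesis using \<open>\<not> \<phi> < \<psi>\<close> by simp
    qed
  qed
qed

lemma Y_repr: "Y = cis \<phi> * Complex (pa Y \<phi>) (pb Y \<phi>)"
  unfolding pa_def pb_def complex_eq_iff by (simp add: algebra_simps cc1)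

lemma level_repr:
  assumes "pp Y \<phi> = c" "norm Y < 1"
  shows "Y = cis \<phi> + of_real (1 - pa Y \<phi>) * (cis \<phi> * Complex (-1) c)"
proof -
  have d: "0 < 1 - pa Y \<phi>" using pa_lt1[OF assms(2)] .
  have "pb Y \<phi> = c * (1 - pa Y \<phi>)" using assms(1) d unfolding pp_def by (simp add: field_simps)
  then have "Complex (pa Y \<phi>) (pb Y \<phi>) = 1 + of_real (1 - pa Y \<phi>) * Complex (-1) c"
    by (simp add: complex_eq_iff algebra_simps)
  then have "Y = cis \<phi> * (1 + of_real (1 - pa Y \<phi>) * Complex (-1) c)"
    using Y_repr[of Y \<phi>] by simp
  then show ?thesis by (simp add: algebra_simps)
qed

lemma frontier_level:
  assumes K: "K \<subseteq> ball 0 1" "compact K" and X: "X \<in> K"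
  shows "\<exists>Y\<in>frontier K. pp Y \<phi> = pp X \<phi>"
proof -
  define R where "R = cis \<phi>"
  define v where "v = X - R"
  have nX: "norm X < 1" using K X by auto
  have nR: "norm R = 1" by (simp add: R_def)
  have v0: "v \<noteq> 0" using nX nR unfolding v_def by auto
  have nv: "norm v < 2" unfolding v_def using norm_triangle_ineq4[of X R] nX nR by linarith
  have nvp: "0 < norm v" using v0 by simp
  define N where "N = 2 / norm v"
  have N1: "1 < N" unfolding N_def using nv nvp by (simp add: field_simps)
  define U where "U = {1..N} \<inter> {u. R + of_real u * v \<in> K}"
  have "closed ((\<lambda>u::real. R + of_real u * v) -` K)"
    by (rule continuous_closed_vimage) (auto intro!: continuous_intros compact_imp_closed K)
  then have cl: "closed {u::real. R + of_real u * v \<in> K}" by (simp add: vimage_def)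
  have cU: "compact U" unfolding U_def by (rule compact_Int_closed[OF compact_Icc cl])
  have X1: "R + of_real 1 * v = X" unfolding v_def by simp
  have U1: "1 \<in> U" unfolding U_def using N1 X X1 by auto
  obtain u0 where u0: "u0 \<in> U" "\<forall>u\<in>U. u \<le> u0"
    using continuous_attains_sup[OF cU _ continuous_on_id] U1 by auto
  define Y where "Y = R + of_real u0 * v"
  have YK: "Y \<in> K" using u0 unfolding U_def Y_def by auto
  have u01: "1 \<le> u0" using u0 U1 by auto
  have notint: "Y \<notin> interior K"
  proof
    assume "Y \<in> interior K"
    then obtain e where e: "e > 0" "ball Y e \<subseteq> K" using mem_interior by blast
    define u1 where "u1 = u0 + e / (2 * norm v)"
    define Z where "Z = R + of_real u1 * v"
    have ZY: "Z - Y = of_real (e / (2 * norm v)) * v" unfolding Z_def Y_def u1_def by (simp add: algebra_simps)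
    have "norm (Z - Y) = \<bar>e / (2 * norm v)\<bar> * norm v" unfolding ZY norm_mult norm_of_real ..
    also have "\<dots> = e / 2" using e nvp by simp
    finally have "norm (Z - Y) = e / 2" .
    then have "dist Y Z < e" using e by (simp add: dist_norm norm_minus_commute)
    then have ZK: "Z \<in> K" using e by auto
    then have nZ: "norm Z < 1" using K by auto
    have epos: "0 < e / (2 * norm v)" using e nvp by simp
    have u11: "1 \<le> u1" using u01 epos unfolding u1_def by linarith
    have "norm (of_real u1 * v) \<le> norm Z + norm R"
      using norm_triangle_ineq4[of Z R] unfolding Z_def by simp
    moreover have "norm (of_real u1 * v) = u1 * norm v" using u11 by (simp add: norm_mult)
    ultimately have "u1 * norm v < 2" using nZ nR by linarith
    then have "u1 \<le> N" unfolding N_def using nvp by (simp add: field_simps)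
    moreover note u11
    ultimately have "u1 \<in> U" unfolding U_def using ZK Z_def by auto
    then have "u1 \<le> u0" using u0 by auto
    then show False unfolding u1_def using epos by linarith
  qed
  have YF: "Y \<in> frontier K" unfolding frontier_def
    using YK notint closure_subset[of K] by auto
  have paY: "1 - pa Y \<phi> = u0 * (1 - pa X \<phi>)"
    unfolding Y_def v_def R_def pa_add pa_scale pa_diff pa_R by (simp add: algebra_simps)
  have pbY: "pb Y \<phi> = u0 * pb X \<phi>"
    unfolding Y_def v_def R_def pb_add pb_scale pb_diff pb_R by (simp add: algebra_simps)
  have "pp Y \<phi> = pp X \<phi>" unfolding pp_def paY pbY using u01 by simp
  then show ?thesis using YF by blast
qed

lemma pigeon4:
  fixes w :: real and f :: "'a \<Rightarrow> real"
  assumes "w \<noteq> f p1" "w \<noteq> f p2" "w \<noteq> f p3" "f p1 \<noteq> f p2" "f p1 \<noteq> f p3" "f p2 \<noteq> f p3"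
  shows "\<exists>x\<in>{p1,p2,p3}. \<exists>y\<in>{p1,p2,p3}. (w < f x \<and> f x < f y) \<or> (f y < f x \<and> f x < w)"
proof -
  have side: "\<exists>x\<in>{p1,p2,p3}. \<exists>y\<in>{p1,p2,p3}. (w < f x \<and> f x < f y) \<or> (f y < f x \<and> f x < w)"
    if "a \<in> {p1,p2,p3}" "b \<in> {p1,p2,p3}" "f a \<noteq> f b" "(w < f a \<and> w < f b) \<or> (f a < w \<and> f b < w)" for a b
  proof (cases "f a < f b")
    case True
    show ?thesis
    proof (cases "w < f a")
      case True then show ?thesis using \<open>f a < f b\<close> that by blast
    next
      case False then have "f a < w" "f b < w" using that by auto
      then show ?thesis using that \<open>f a < f b\<close> by blast
    qed
  next
    case False
    then have lt: "f b < f a" using that(3) by auto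
    show ?thesis
    proof (cases "w < f a")
      case True then have "w < f b" using that by auto
      then show ?thesis using lt that by blast
    next
      case False then have "f a < w" using that by auto
      then show ?thesis using lt that by blast
    qed
  qed
  show ?thesis
  proof (cases "w < f p1")
    case c1: True
    show ?thesis
    proof (cases "w < f p2")
      case True then show ?thesis using side[of p1 p2] c1 assms by auto
    next
      case c2: False then have c2': "f p2 < w" using assms by auto
      show ?thesis
      proof (cases "w < f p3")
        case True then show ?thesis using side[of p1 p3] c1 assms by auto
      next
        case False then have "f p3 < w" using assms by auto
        then show ?thesis using side[of p2 p3] c2' assms by auto
      qed
    qed
  next
    case c1: False then have c1': "f p1 < w" using assms by auto
    show ?thesis
    proof (cases "w < f p2")
      case c2: True
      show ?thesis
      proof (cases "w < f p3")
        case True then show ?thesis using side[of p2 p3] c2 assms by auto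
      next
        case False then have "f p3 < w" using assms by auto
        then show ?thesis using side[of p1 p3] c1' assms by auto
      qed
    next
      case False then have "f p2 < w" using assms by auto
      then show ?thesis using side[of p1 p2] c1' assms by auto
    qed
  qed
qed

lemma between_interior:
  fixes K :: "complex set"
  assumes "convex K" "W \<in> interior K" "Yb \<in> K"
    and "W = R + of_real rw * d" "Ya = R + of_real ra * d" "Yb = R + of_real rb * d"
    and "(rw < ra \<and> ra < rb) \<or> (rb < ra \<and> ra < rw)"
  shows "Ya \<in> interior K"
proof -
  define e where "e = (rb - ra) / (rb - rw)"
  have e: "0 < e" "e \<le> 1" using assms(7) unfolding e_def by (auto simp: field_simps)
  have "Yb \<in> closure K" using assms(3) closure_subset by auto
  from mem_interior_closure_convex_shrink[OF assms(1,2) this e]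
  have "Yb - e *\<^sub>R (Yb - W) \<in> interior K" .
  moreover have "Yb - e *\<^sub>R (Yb - W) = Ya"
  proof -
    have ne: "rb - rw \<noteq> 0" using assms(7) by auto
    have "rb - e * (rb - rw) = ra" unfolding e_def using ne by (simp add: field_simps)
    have "Yb - e *\<^sub>R (Yb - W) = R + of_real (rb - e * (rb - rw)) * d"
      unfolding assms(4-6) scaleR_conv_of_real by (simp add: algebra_simps)
    then show ?thesis using \<open>rb - e * (rb - rw) = ra\<close> assms(5) by simp
  qed
  ultimately show ?thesis by simp
qed

lemma at_most_two:
  fixes K :: "complex set"
  assumes K: "K \<subseteq> ball 0 1" "compact K" "convex K" "interior K \<noteq> {}"
    and lo: "X1 \<in> K" "pp X1 \<phi> < c" and hi: "X2 \<in> K" "c < pp X2 \<phi>"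
    and Y: "Y1 \<in> frontier K" "Y2 \<in> frontier K" "Y3 \<in> frontier K"
    and Yc: "pp Y1 \<phi> = c" "pp Y2 \<phi> = c" "pp Y3 \<phi> = c"
    and dist: "Y1 \<noteq> Y2" "Y1 \<noteq> Y3" "Y2 \<noteq> Y3"
  shows False
proof -
  have fK: "frontier K \<subseteq> K" using K(2) by (simp add: compact_imp_closed frontier_subset_closed)
  have ctK: "continuous_on K (\<lambda>X. pp X \<phi>)" using pp_cont_on K(1) by blast
  obtain Z where Z: "Z \<in> interior K" using K(4) by blast
  have ZK: "Z \<in> K" using Z interior_subset by blast
  have seg: "\<exists>W \<in> interior K. pp W \<phi> = c" if hT: "T \<in> K" and hc: "(pp Z \<phi> \<le> c \<and> c \<le> pp T \<phi>) \<or> (pp T \<phi> \<le> c \<and> c \<le> pp Z \<phi>)" and hn: "pp T \<phi> \<noteq> c" for T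
  proof -
    define f where "f s = pp (Z + of_real s * (T - Z)) \<phi>" for s
    have inK: "Z + of_real s * (T - Z) \<in> K" if "0 \<le> s" "s \<le> 1" for s
    proof -
      have "(1 - s) *\<^sub>R Z + s *\<^sub>R T \<in> K"
        using K(3) ZK hT that by (intro convexD) auto
      moreover have "(1 - s) *\<^sub>R Z + s *\<^sub>R T = Z + of_real s * (T - Z)"
        by (simp add: scaleR_conv_of_real algebra_simps)
      ultimately show ?thesis by simp
    qed
    have cf: "continuous_on {0..1} f" unfolding f_def
      by (rule continuous_on_compose2[OF ctK]) (auto intro!: continuous_intros inK)
    have f0: "f 0 = pp Z \<phi>" and f1: "f 1 = pp T \<phi>" by (simp_all add: f_def)
    obtain s where s: "0 \<le> s" "s \<le> 1" "f s = c"
      using hc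
    proof
      assume "pp Z \<phi> \<le> c \<and> c \<le> pp T \<phi>"
      then show ?thesis using IVT'[of f 0 c 1, OF _ _ _ cf] f0 f1 that by auto
    next
      assume "pp T \<phi> \<le> c \<and> c \<le> pp Z \<phi>"
      then show ?thesis using IVT2'[of f 1 c 0, OF _ _ _ cf] f0 f1 that by auto
    qed
    have s1: "s < 1" using s f1 hn by (cases "s = 1") auto
    have "T \<in> closure K" using hT closure_subset by auto
    from mem_interior_closure_convex_shrink[OF K(3) Z this, of "1 - s"] s s1
    have "T - (1 - s) *\<^sub>R (T - Z) \<in> interior K" by auto
    moreover have "T - (1 - s) *\<^sub>R (T - Z) = Z + of_real s * (T - Z)"
      by (simp add: scaleR_conv_of_real algebra_simps)
    ultimately show ?thesis using s(3) unfolding f_def by auto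
  qed
  obtain W where W: "W \<in> interior K" "pp W \<phi> = c"
  proof (cases "pp Z \<phi> \<le> c")
    case True
    then obtain W where "W \<in> interior K" "pp W \<phi> = c" using seg[OF hi(1)] hi by auto
    then show ?thesis using that by blast
  next
    case False
    then obtain W where "W \<in> interior K" "pp W \<phi> = c" using seg[OF lo(1)] lo by auto
    then show ?thesis using that by blast
  qed
  have WK: "W \<in> K" using W interior_subset by blast
  have nb: "\<And>Y. Y \<in> K \<Longrightarrow> norm Y < 1" using K(1) by auto
  define R where "R = cis \<phi>"
  define d where "d = cis \<phi> * Complex (-1) c"
  define \<rho> where "\<rho> Y = 1 - pa Y \<phi>" for Y
  have rep: "Y = R + of_real (\<rho> Y) * d" if "Y \<in> K" "pp Y \<phi> = c" for Y
    unfolding R_def d_def \<rho>_def using level_repr[OF that(2) nb[OF that(1)]] .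
  have repY: "Y = R + of_real (\<rho> Y) * d" if "Y \<in> {Y1,Y2,Y3}" for Y
    using that rep Y Yc fK by auto
  have repW: "W = R + of_real (\<rho> W) * d" using rep WK W by auto
  have inj: "\<rho> A \<noteq> \<rho> B" if "A \<in> {W,Y1,Y2,Y3}" "B \<in> {W,Y1,Y2,Y3}" "A \<noteq> B" for A B
  proof
    assume "\<rho> A = \<rho> B"
    moreover have "A = R + of_real (\<rho> A) * d" using that(1) repY repW by auto
    moreover have "B = R + of_real (\<rho> B) * d" using that(2) repY repW by auto
    ultimately show False using that(3) by simp
  qed
  have WY: "W \<noteq> Y1" "W \<noteq> Y2" "W \<noteq> Y3" using W(1) Y by (auto simp: frontier_def)
  obtain Ya Yb where ab: "Ya \<in> {Y1,Y2,Y3}" "Yb \<in> {Y1,Y2,Y3}"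
    "(\<rho> W < \<rho> Ya \<and> \<rho> Ya < \<rho> Yb) \<or> (\<rho> Yb < \<rho> Ya \<and> \<rho> Ya < \<rho> W)"
  proof -
    have "\<rho> W \<noteq> \<rho> Y1" "\<rho> W \<noteq> \<rho> Y2" "\<rho> W \<noteq> \<rho> Y3"
      "\<rho> Y1 \<noteq> \<rho> Y2" "\<rho> Y1 \<noteq> \<rho> Y3" "\<rho> Y2 \<noteq> \<rho> Y3"
      using inj[of W Y1] inj[of W Y2] inj[of W Y3] inj[of Y1 Y2] inj[of Y1 Y3] inj[of Y2 Y3] WY dist
      by auto
    from pigeon4[of "\<rho> W" \<rho> Y1 Y2 Y3, OF this] show ?thesis using that by blast
  qed
  have "Ya \<in> interior K"
    by (rule between_interior[OF K(3) W(1), of Yb R "\<rho> W" d Ya "\<rho> Ya" "\<rho> Yb"])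
       (use ab repY repW Y fK in auto)
  moreover have "Ya \<in> frontier K" using ab Y by auto
  ultimately show False by (auto simp: frontier_def)
qed

lemma card_le2:
  fixes J :: "nat set"
  assumes "finite J" and key: "\<And>i j k. i\<in>J \<Longrightarrow> j\<in>J \<Longrightarrow> k\<in>J \<Longrightarrow> i<j \<Longrightarrow> j<k \<Longrightarrow> False"
  shows "card J \<le> 2"
proof (rule ccontr)
  assume "\<not> card J \<le> 2"
  then obtain T where T: "T \<subseteq> J" "card T = 3" using obtain_subset_with_card_n[of 3 J] by auto
  then obtain x y z where xyz: "T = {x,y,z}" "x\<noteq>y" "y\<noteq>z" "x\<noteq>z" by (auto simp: card_3_iff)
  then have J: "x\<in>J" "y\<in>J" "z\<in>J" using T by auto
  consider "x<y" "y<z" | "x<z" "z<y" | "y<x" "x<z" | "y<z" "z<x" | "z<x" "x<y" | "z<y" "y<x"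
    using xyz by arith
  then show False
  proof cases
    case 1 then show ?thesis using key[of x y z] J by blast
  next
    case 2 then show ?thesis using key[of x z y] J by blast
  next
    case 3 then show ?thesis using key[of y x z] J by blast
  next
    case 4 then show ?thesis using key[of y z x] J by blast
  next
    case 5 then show ?thesis using key[of z x y] J by blast
  next
    case 6 then show ?thesis using key[of z y x] J by blast
  qed
qed

lemma part_mono:
  fixes t :: "nat \<Rightarrow> real"
  assumes "\<forall>i<n. t i \<le> t (Suc i)"
  shows "i \<le> j \<Longrightarrow> j \<le> n \<Longrightarrow> t i \<le> t j"
proof (induction j)
  case 0 then show ?case by simp
next
  case (Suc j)
  show ?case
  proof (cases "i = Suc j")
    case True then show ?thesis by simp
  next
    case False
    then have "i \<le> j" using Suc by simp
    then have "t i \<le> t j" using Suc by simp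
    also have "t j \<le> t (Suc j)" using assms Suc by simp
    finally show ?thesis .
  qed
qed

lemma measure_Ioo_real: "(l::real) \<le> u \<Longrightarrow> measure lborel {l<..<u} = u - l"
  by (simp add: measure_def)

lemma tv_bound:
  fixes f :: "real \<Rightarrow> real" and t :: "nat \<Rightarrow> real"
  assumes cont: "continuous_on {0..1} f"
    and t: "t 0 = 0" "t n = 1" "\<forall>i<n. t i \<le> t (Suc i)"
    and rng: "\<forall>s\<in>{0..1}. m \<le> f s \<and> f s \<le> M"
    and no3: "\<And>c s1 s2 s3. 0 < s1 \<Longrightarrow> s1 < s2 \<Longrightarrow> s2 < s3 \<Longrightarrow> s3 < 1 \<Longrightarrow>
                 f s1 = c \<Longrightarrow> f s2 = c \<Longrightarrow> f s3 = c \<Longrightarrow> m < c \<Longrightarrow> c < M \<Longrightarrow> False"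
  shows "(\<Sum>i<n. \<bar>f (t (Suc i)) - f (t i)\<bar>) \<le> 2 * (M - m)"
proof -
  define a where "a i = f (t i)" for i
  define I where "I i = {min (a i) (a (Suc i)) <..< max (a i) (a (Suc i))}" for i
  have tm: "\<And>i j. i \<le> j \<Longrightarrow> j \<le> n \<Longrightarrow> t i \<le> t j" using part_mono[OF t(3)] by blast
  have t01: "0 \<le> t i \<and> t i \<le> 1" if "i \<le> n" for i
    using tm[of 0 i] tm[of i n] that t by auto
  have ai: "m \<le> a i \<and> a i \<le> M" if "i \<le> n" for i
    using rng t01[OF that] unfolding a_def by auto
  have mM: "m \<le> M" using ai[of 0] by auto
  have meas: "\<bar>a (Suc i) - a i\<bar> = integral\<^sup>L lborel (indicator (I i) :: real \<Rightarrow> real)" for i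
  proof -
    have "integral\<^sup>L lborel (indicator (I i) :: real \<Rightarrow> real) = measure lborel (I i)" by simp
    also have "\<dots> = max (a i) (a (Suc i)) - min (a i) (a (Suc i))"
      unfolding I_def by (rule measure_Ioo_real) simp
    also have "\<dots> = \<bar>a (Suc i) - a i\<bar>" by (auto simp: max_def min_def)
    finally show ?thesis by simp
  qed
  have int: "integrable lborel (indicator (I i) :: real \<Rightarrow> real)" for i
    unfolding I_def by (simp add: integrable_indicator_iff)
  have cross: "\<exists>s. t i < s \<and> s < t (Suc i) \<and> f s = c" if "i < n" "c \<in> I i" for i c
  proof -
    have sub: "{t i..t (Suc i)} \<subseteq> {0..1}" using t01[of i] t01[of "Suc i"] that(1) by auto
    have ct: "continuous_on {t i..t (Suc i)} f" using continuous_on_subset[OF cont sub] .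
    have le: "t i \<le> t (Suc i)" using t(3) that(1) by auto
    have c: "min (a i) (a (Suc i)) < c" "c < max (a i) (a (Suc i))" using that(2) unfolding I_def by auto
    obtain s where s: "t i \<le> s" "s \<le> t (Suc i)" "f s = c"
    proof (cases "a i \<le> a (Suc i)")
      case True
      then have "f (t i) \<le> c" "c \<le> f (t (Suc i))" using c unfolding a_def by auto
      then show ?thesis using IVT'[of f "t i" c "t (Suc i)", OF _ _ le ct] that by blast
    next
      case False
      then have "f (t (Suc i)) \<le> c" "c \<le> f (t i)" using c unfolding a_def by auto
      then show ?thesis using IVT2'[of f "t (Suc i)" c "t i", OF _ _ le ct] that by blast
    qed
    have "s \<noteq> t i" "s \<noteq> t (Suc i)" using s c unfolding a_def by auto
    then show ?thesis using s by force
  qed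
  have pw: "(\<Sum>i<n. indicator (I i) c) \<le> 2 * (indicator {m<..<M} c :: real)" for c
  proof -
    define J where "J = {..<n} \<inter> {i. c \<in> I i}"
    have fJ: "finite J" unfolding J_def by simp
    have sumJ: "(\<Sum>i<n. indicator (I i) c :: real) = real (card J)"
      unfolding indicator_def J_def by (simp add: sum.If_cases)
    show ?thesis
    proof (cases "m < c \<and> c < M")
      case True
      have "card J \<le> 2"
      proof (rule card_le2[OF fJ])
        fix i j k assume ijk: "i \<in> J" "j \<in> J" "k \<in> J" "i < j" "j < k"
        obtain si where si: "t i < si" "si < t (Suc i)" "f si = c" using cross[of i c] ijk unfolding J_def by auto
        obtain sj where sj: "t j < sj" "sj < t (Suc j)" "f sj = c" using cross[of j c] ijk unfolding J_def by auto
        obtain sk where sk: "t k < sk" "sk < t (Suc k)" "f sk = c" using cross[of k c] ijk unfolding J_def by auto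
        have kn: "k < n" using ijk unfolding J_def by auto
        have "t (Suc i) \<le> t j" using tm[of "Suc i" j] ijk kn by auto
        moreover have "t (Suc j) \<le> t k" using tm[of "Suc j" k] ijk kn by auto
        moreover have "0 \<le> t i" using t01[of i] ijk kn by auto
        moreover have "t (Suc k) \<le> 1" using t01[of "Suc k"] kn by auto
        ultimately show False using no3[of si sj sk c] si sj sk True by linarith
      qed
      then show ?thesis using sumJ True by simp
    next
      case False
      have "J = {}"
      proof (rule ccontr)
        assume "J \<noteq> {}"
        then obtain i where i: "i < n" "c \<in> I i" unfolding J_def by auto
        then have "m \<le> a i" "a i \<le> M" "m \<le> a (Suc i)" "a (Suc i) \<le> M" using ai[of i] ai[of "Suc i"] by auto
        then show False using i(2) False unfolding I_def by (auto simp: min_def max_def split: if_splits)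
      qed
      then show ?thesis using sumJ by simp
    qed
  qed
  have "(\<Sum>i<n. \<bar>f (t (Suc i)) - f (t i)\<bar>) = (\<Sum>i<n. integral\<^sup>L lborel (indicator (I i) :: real \<Rightarrow> real))"
    using meas unfolding a_def by simp
  also have "\<dots> = integral\<^sup>L lborel (\<lambda>c. \<Sum>i<n. indicator (I i) c :: real)"
    by (rule Bochner_Integration.integral_sum[symmetric]) (rule int)
  also have "\<dots> \<le> integral\<^sup>L lborel (\<lambda>c. 2 * (indicator {m<..<M} c :: real))"
    by (rule integral_mono) (auto intro!: int simp: pw integrable_indicator_iff mM)
  also have "\<dots> = 2 * (M - m)" using mM by (simp add: measure_Ioo_real)
  finally show ?thesis .
qed

definition ip :: "complex \<Rightarrow> complex \<Rightarrow> real" where "ip X Y = Re X * Re Y + Im X * Im Y"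

lemma norm_line: fixes P d :: complex
  shows "(norm (P + of_real u * d))\<^sup>2 = (norm P)\<^sup>2 + 2 * u * ip P d + u\<^sup>2 * (norm d)\<^sup>2"
  unfolding cmod_power2 ip_def by (simp add: power2_eq_square algebra_simps)

lemma dist_line: fixes P d :: complex
  shows "dist (P + of_real u * d) (P + of_real w * d) = \<bar>u - w\<bar> * norm d"
proof -
  have "dist (P + of_real u * d) (P + of_real w * d) = norm (of_real (u - w) * d)"
    unfolding dist_norm by (simp add: algebra_simps)
  also have "\<dots> = \<bar>u - w\<bar> * norm d" by (simp only: norm_mult norm_of_real)
  finally show ?thesis .
qed

lemma line_circle:
  fixes P Q :: complex
  assumes "norm P < 1" "norm Q < 1" "P \<noteq> Q"
  obtains u1 u2 where "u1 < 0" "1 < u2" "norm (P + of_real u1 * (Q - P)) = 1" "norm (P + of_real u2 * (Q - P)) = 1"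
    "\<And>u. norm (P + of_real u * (Q - P)) = 1 \<Longrightarrow> u = u1 \<or> u = u2"
proof -
  define d where "d = Q - P"
  define al where "al = (norm d)\<^sup>2"
  define be where "be = ip P d"
  define ga where "ga = (norm P)\<^sup>2 - 1"
  have al: "0 < al" unfolding al_def d_def using assms by simp
  have ga: "ga < 0" unfolding ga_def using assms(1) by (simp add: abs_square_less_1)
  define De where "De = be\<^sup>2 - al * ga"
  have De: "be\<^sup>2 < De" unfolding De_def using al ga by (simp add: mult_pos_neg)
  define sq where "sq = sqrt De"
  have De0: "0 \<le> De" using De by (metis le_less_trans zero_le_power2 less_imp_le)
  have sq2: "sq\<^sup>2 = De" unfolding sq_def using De0 by simp
  have sqb: "\<bar>be\<bar> < sq" unfolding sq_def using De by (intro real_less_rsqrt) simp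
  define u1 where "u1 = (- be - sq) / al"
  define u2 where "u2 = (- be + sq) / al"
  have key: "(norm (P + of_real u * d))\<^sup>2 - 1 = al * (u - u1) * (u - u2)" for u
  proof -
    have "al * (u - u1) * (u - u2) = al * u\<^sup>2 + 2 * be * u + (be\<^sup>2 - sq\<^sup>2) / al"
      unfolding u1_def u2_def using al by (simp add: field_simps power2_eq_square)
    also have "(be\<^sup>2 - sq\<^sup>2) / al = ga" unfolding sq2 De_def using al by (simp add: field_simps)
    finally show ?thesis unfolding norm_line al_def be_def ga_def by (simp add: algebra_simps)
  qed
  have u1: "u1 < 0" unfolding u1_def using al sqb by (simp add: divide_neg_pos)
  have "(norm (P + of_real 1 * d))\<^sup>2 - 1 < 0" unfolding d_def using assms(2)
    by (simp add: power_less_one_iff)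
  then have "al * (1 - u1) * (1 - u2) < 0" using key[of 1] by simp
  moreover have "0 < al * (1 - u1)" using al u1 by simp
  ultimately have u2: "1 < u2" using al u1 by (auto simp: mult_less_0_iff)
  have r1: "norm (P + of_real u1 * d) = 1"
  proof -
    have "(norm (P + of_real u1 * d))\<^sup>2 = 1" using key[of u1] by simp
    then show ?thesis using norm_ge_zero[of "P + of_real u1 * d"] by (auto simp: power2_eq_1_iff)
  qed
  have r2: "norm (P + of_real u2 * d) = 1"
  proof -
    have "(norm (P + of_real u2 * d))\<^sup>2 = 1" using key[of u2] by simp
    then show ?thesis using norm_ge_zero[of "P + of_real u2 * d"] by (auto simp: power2_eq_1_iff)
  qed
  have roots: "u = u1 \<or> u = u2" if "norm (P + of_real u * d) = 1" for u
  proof -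
    have "al * (u - u1) * (u - u2) = 0" using key[of u] that by simp
    then show ?thesis using al by simp
  qed
  show ?thesis using that[OF u1 u2] r1 r2 roots unfolding d_def by blast
qed

lemma klein_AB:
  fixes P Q :: complex
  assumes "norm P < 1" "norm Q < 1" "P \<noteq> Q"
  obtains u1 u2 where "u1 < 0" "1 < u2" "norm (P + of_real u1 * (Q - P)) = 1" "norm (P + of_real u2 * (Q - P)) = 1"
    "\<And>u. norm (P + of_real u * (Q - P)) = 1 \<Longrightarrow> u = u1 \<or> u = u2"
    "klein_A P Q = P + of_real u1 * (Q - P)" "klein_B P Q = P + of_real u2 * (Q - P)"
proof -
  obtain u1 u2 where u: "u1 < 0" "1 < u2" "norm (P + of_real u1 * (Q - P)) = 1" "norm (P + of_real u2 * (Q - P)) = 1"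
    and roots: "\<And>u. norm (P + of_real u * (Q - P)) = 1 \<Longrightarrow> u = u1 \<or> u = u2"
    using line_circle[OF assms] by blast
  define d where "d = Q - P"
  have Qd: "Q = P + of_real 1 * d" unfolding d_def by simp
  have A: "klein_A P Q = P + of_real u1 * d"
    unfolding klein_A_def
  proof (rule the_equality)
    define mu where "mu = - u1 / (1 - u1)"
    have mu: "0 \<le> mu" "mu \<le> 1" unfolding mu_def using u by (auto simp: field_simps)
    have r: "(1 - mu) * u1 + mu = 0" unfolding mu_def using u by (simp add: field_simps)
    have "(1 - mu) *\<^sub>R (P + of_real u1 * d) + mu *\<^sub>R Q = P + of_real ((1 - mu) * u1 + mu) * d"
      unfolding Qd scaleR_conv_of_real by (simp add: algebra_simps)
    then have "P = (1 - mu) *\<^sub>R (P + of_real u1 * d) + mu *\<^sub>R Q" using r by simp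
    then have "P \<in> closed_segment (P + of_real u1 * d) Q" unfolding in_segment using mu by blast
    then show "norm (P + of_real u1 * d) = 1 \<and> P \<in> closed_segment (P + of_real u1 * d) Q"
      using u d_def by simp
  next
    fix A' assume A': "norm A' = 1 \<and> P \<in> closed_segment A' Q"
    then obtain mu where mu: "0 \<le> mu" "mu \<le> 1" "P = (1 - mu) *\<^sub>R A' + mu *\<^sub>R Q"
      unfolding in_segment by blast
    have mu1: "mu \<noteq> 1" using mu assms(3) by auto
    then have pos: "0 < 1 - mu" using mu by simp
    define v where "v = - mu / (1 - mu)"
    have "of_real (1 - mu) * A' = of_real (1 - mu) * (P + of_real v * d)"
    proof -
      have "of_real (1 - mu) * A' = P - of_real mu * Q" using mu(3) by (simp add: scaleR_conv_of_real algebra_simps)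
      also have "\<dots> = of_real (1 - mu) * P - of_real mu * d" unfolding d_def by (simp add: algebra_simps)
      also have "\<dots> = of_real (1 - mu) * (P + of_real v * d)"
        unfolding v_def using pos by (simp add: algebra_simps of_real_divide) (simp add: field_simps)
      finally show ?thesis .
    qed
    then have A'v: "A' = P + of_real v * d" using pos by simp
    have "v \<le> 0" unfolding v_def using mu pos by simp
    then have "v = u1" using roots[of v] A' A'v u unfolding d_def by force
    then show "A' = P + of_real u1 * d" using A'v by simp
  qed
  have B: "klein_B P Q = P + of_real u2 * d"
    unfolding klein_B_def
  proof (rule the_equality)
    define mu where "mu = 1 / u2"
    have mu: "0 \<le> mu" "mu \<le> 1" unfolding mu_def using u by (auto simp: field_simps)
    have r: "mu * u2 = 1" unfolding mu_def using u by (simp add: field_simps)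
    have "(1 - mu) *\<^sub>R P + mu *\<^sub>R (P + of_real u2 * d) = P + of_real (mu * u2) * d"
      unfolding scaleR_conv_of_real by (simp add: algebra_simps)
    then have "Q = (1 - mu) *\<^sub>R P + mu *\<^sub>R (P + of_real u2 * d)" using r Qd by simp
    then have "Q \<in> closed_segment P (P + of_real u2 * d)" unfolding in_segment using mu by blast
    then show "norm (P + of_real u2 * d) = 1 \<and> Q \<in> closed_segment P (P + of_real u2 * d)"
      using u d_def by simp
  next
    fix B' assume B': "norm B' = 1 \<and> Q \<in> closed_segment P B'"
    then obtain mu where mu: "0 \<le> mu" "mu \<le> 1" "Q = (1 - mu) *\<^sub>R P + mu *\<^sub>R B'"
      unfolding in_segment by blast
    have mu0: "mu \<noteq> 0" using mu assms(3) by auto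
    then have pos: "0 < mu" using mu by simp
    define v where "v = 1 / mu"
    have "of_real mu * B' = of_real mu * (P + of_real v * d)"
    proof -
      have "of_real mu * B' = Q - of_real (1 - mu) * P" using mu(3) by (simp add: scaleR_conv_of_real algebra_simps)
      also have "\<dots> = of_real mu * P + d" unfolding d_def by (simp add: algebra_simps)
      also have "\<dots> = of_real mu * (P + of_real v * d)"
        unfolding v_def using pos by (simp add: algebra_simps of_real_divide)
      finally show ?thesis .
    qed
    then have B'v: "B' = P + of_real v * d" using pos by simp
    have "1 \<le> v" unfolding v_def using mu pos by simp
    then have "v = u2" using roots[of v] B' B'v u unfolding d_def by force
    then show "B' = P + of_real u2 * d" using B'v by simp
  qed
  show ?thesis using that[OF u roots] A B unfolding d_def by blast
qed

lemma klein_dist_formula: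
  fixes P Q :: complex
  assumes "norm P < 1" "norm Q < 1" "P \<noteq> Q"
    and u: "u1 < 0" "1 < u2" "klein_A P Q = P + of_real u1 * (Q - P)" "klein_B P Q = P + of_real u2 * (Q - P)"
  shows "klein_dist P Q = (1/2) * ln (((1 - u1) / (- u1)) * (u2 / (u2 - 1)))"
proof -
  define d where "d = Q - P"
  have nd: "0 < norm d" unfolding d_def using assms by simp
  have Qd: "Q = P + of_real 1 * d" unfolding d_def by simp
  have Pd: "P = P + of_real 0 * d" by simp
  have e1: "dist (klein_A P Q) Q = dist (P + of_real u1 * d) (P + of_real 1 * d)"
    using u(3) d_def by simp
  have e2: "dist (klein_A P Q) P = dist (P + of_real u1 * d) (P + of_real 0 * d)"
    using u(3) d_def by simp
  have e3: "dist (klein_B P Q) P = dist (P + of_real u2 * d) (P + of_real 0 * d)"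
    using u(4) d_def by simp
  have e4: "dist (klein_B P Q) Q = dist (P + of_real u2 * d) (P + of_real 1 * d)"
    using u(4) d_def by simp
  have "dist (klein_A P Q) Q = (1 - u1) * norm d" unfolding e1 dist_line using u by simp
  moreover have "dist (klein_A P Q) P = (- u1) * norm d" unfolding e2 dist_line using u by simp
  moreover have "dist (klein_B P Q) P = u2 * norm d" unfolding e3 dist_line using u by simp
  moreover have "dist (klein_B P Q) Q = (u2 - 1) * norm d" unfolding e4 dist_line using u by simp
  ultimately show ?thesis unfolding klein_dist_def using assms(3) nd by simp
qed

lemma cis_inj:
  assumes "0 \<le> a" "a < 2*pi" "0 \<le> b" "b < 2*pi" "cis a = cis b"
  shows "a = b"
proof -
  have "cis (a - b) = 1" using assms(5) cis_divide[of a b] by simp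
  then have "cos (a - b) = 1" by (metis cis.sel(1) one_complex.sel(1))
  then have "\<exists>n::int. a - b = real_of_int n * 2 * pi" using cos_one_2pi_int by blast
  then obtain n :: int where n: "a - b = real_of_int n * 2 * pi" by blast
  have "\<bar>real_of_int n * 2 * pi\<bar> < 2 * pi" using n assms by auto
  then have "\<bar>real_of_int n\<bar> < 1" by (simp add: abs_mult)
  then have "n = 0" by linarith
  then show ?thesis using n by simp
qed

lemma angle_exists:
  assumes "norm z = 1" shows "\<exists>\<theta>. 0 \<le> \<theta> \<and> \<theta> < 2*pi \<and> cis \<theta> = z"
  using Arg2pi[of z] complex_norm_eq_1_exp[of z] assms by (metis cis_conv_exp)

lemma seg_int:
  fixes G D :: "real \<Rightarrow> real"
  assumes ab: "a \<le> b" and der: "\<And>x. (G has_real_derivative D x) (at x)"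
    and cD: "continuous_on {a..b} D" and nz: "\<And>x. a < x \<Longrightarrow> x < b \<Longrightarrow> D x \<noteq> 0"
  shows "((\<lambda>x. \<bar>D x\<bar>) has_integral \<bar>G b - G a\<bar>) {a..b} \<and>
    (((\<forall>x\<in>{a..b}. 0 \<le> D x) \<and> G a \<le> G b) \<or> ((\<forall>x\<in>{a..b}. D x \<le> 0) \<and> G b \<le> G a))"
proof -
  have ftc: "(D has_integral G b - G a) {a..b}"
  proof (rule fundamental_theorem_of_calculus[OF ab])
    fix x assume "x \<in> {a..b}"
    have "(G has_vector_derivative D x) (at x)"
      using der[of x] by (simp add: has_real_derivative_iff_has_vector_derivative)
    then show "(G has_vector_derivative D x) (at x within {a..b})"
      by (rule has_vector_derivative_at_within)
  qed
  have sgn: "(\<forall>x\<in>{a..b}. 0 \<le> D x) \<or> (\<forall>x\<in>{a..b}. D x \<le> 0)"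
  proof (rule ccontr)
    assume "\<not> ?thesis"
    then obtain x y where xy: "x \<in> {a..b}" "D x < 0" "y \<in> {a..b}" "0 < D y" by (auto simp: not_le)
    show False
    proof (cases "x \<le> y")
      case True
      have "continuous_on {x..y} D" using cD xy by (auto intro: continuous_on_subset)
      then obtain z where z: "x \<le> z" "z \<le> y" "D z = 0" using IVT'[of D x 0 y] xy True by auto
      then have "z \<noteq> x" "z \<noteq> y" using xy by auto
      then show False using nz[of z] z xy by auto
    next
      case False
      have "continuous_on {y..x} D" using cD xy by (auto intro: continuous_on_subset)
      then obtain z where z: "y \<le> z" "z \<le> x" "D z = 0" using IVT2'[of D x 0 y] xy False by auto
      then have "z \<noteq> x" "z \<noteq> y" using xy by auto
      then show False using nz[of z] z xy by auto
    qed
  qed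
  then show ?thesis
  proof
    assume pos: "\<forall>x\<in>{a..b}. 0 \<le> D x"
    have "0 \<le> G b - G a" using has_integral_nonneg[OF ftc] pos by auto
    moreover have "((\<lambda>x. \<bar>D x\<bar>) has_integral G b - G a) {a..b}"
      using ftc has_integral_cong[of "{a..b}" "\<lambda>x. \<bar>D x\<bar>" D] pos by auto
    ultimately show ?thesis using pos by auto
  next
    assume neg: "\<forall>x\<in>{a..b}. D x \<le> 0"
    have ftc': "((\<lambda>x. - D x) has_integral - (G b - G a)) {a..b}" using has_integral_neg[OF ftc] .
    have "0 \<le> - (G b - G a)" using has_integral_nonneg[OF ftc'] neg by auto
    moreover have "((\<lambda>x. \<bar>D x\<bar>) has_integral - (G b - G a)) {a..b}"
      using ftc' has_integral_cong[of "{a..b}" "\<lambda>x. \<bar>D x\<bar>" "\<lambda>x. - D x"] neg by auto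
    ultimately show ?thesis using neg by auto
  qed
qed

lemma pa_ip: "pa X \<phi> = ip X (cis \<phi>)"
  by (simp add: pa_def ip_def)

lemma ip_lin: "ip (A + of_real u * B) C = ip A C + u * ip B C"
  "ip (A - B) C = ip A C - ip B C"
  by (simp_all add: ip_def algebra_simps)

lemma ip_self: "ip A A = (norm A)\<^sup>2"
proof -
  have "(norm A)\<^sup>2 = (Re A)\<^sup>2 + (Im A)\<^sup>2" by (rule cmod_power2)
  then show ?thesis by (simp add: ip_def power2_eq_square)
qed

lemma numer_eq:
  "pb Q \<phi> * (1 - pa P \<phi>) - pb P \<phi> * (1 - pa Q \<phi>) = Im (cnj (cis \<phi> - P) * (Q - P))"
  unfolding pa_def pb_def by (simp add: algebra_simps cc1)

lemma real_mult:
  assumes "d \<noteq> 0" "Im (cnj w * d) = 0"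
  shows "w = of_real (Re (w / d)) * d"
proof -
  have "Im (w / d) = 0" using assms(2) by (simp add: Im_divide algebra_simps)
  then have "w / d = of_real (Re (w / d))" by (simp add: complex_eq_iff)
  then have "w = of_real (Re (w / d)) * d" using assms(1) by (metis nonzero_divide_eq_eq)
  then show ?thesis .
qed

lemma D_zero:
  fixes P Q :: complex
  assumes "norm P < 1" "norm Q < 1" "P \<noteq> Q" "pp Q \<phi> - pp P \<phi> = 0"
    and roots: "\<And>u. norm (P + of_real u * (Q - P)) = 1 \<Longrightarrow> u = u1 \<or> u = u2"
  shows "cis \<phi> = P + of_real u1 * (Q - P) \<or> cis \<phi> = P + of_real u2 * (Q - P)"
proof -
  have dP: "0 < 1 - pa P \<phi>" and dQ: "0 < 1 - pa Q \<phi>" using pa_lt1 assms by auto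
  have "pb Q \<phi> / (1 - pa Q \<phi>) = pb P \<phi> / (1 - pa P \<phi>)" using assms(4) unfolding pp_def by simp
  then have "pb Q \<phi> * (1 - pa P \<phi>) - pb P \<phi> * (1 - pa Q \<phi>) = 0" using dP dQ
    by (simp add: field_simps)
  then have im: "Im (cnj (cis \<phi> - P) * (Q - P)) = 0" using numer_eq by simp
  define u where "u = Re ((cis \<phi> - P) / (Q - P))"
  have "cis \<phi> - P = of_real u * (Q - P)" unfolding u_def by (rule real_mult) (use assms(3) im in auto)
  then have e: "cis \<phi> = P + of_real u * (Q - P)" by (simp add: algebra_simps)
  then have "norm (P + of_real u * (Q - P)) = 1" by (metis norm_cis)
  then show ?thesis using roots e by blast
qed

lemma G_at_root:
  fixes P Q :: complex
  assumes "norm P < 1" "norm Q < 1" "cis \<phi> = P + of_real u * (Q - P)"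
  shows "u < 0 \<Longrightarrow> ln (1 - pa P \<phi>) - ln (1 - pa Q \<phi>) = ln (- u) - ln (1 - u)"
    and "1 < u \<Longrightarrow> ln (1 - pa P \<phi>) - ln (1 - pa Q \<phi>) = ln u - ln (u - 1)"
proof -
  define R where "R = cis \<phi>"
  define k where "k = ip (Q - P) R"
  have RR: "ip R R = 1" using ip_self[of R] by (simp add: R_def)
  have P: "P = R + of_real (- u) * (Q - P)" using assms(3) unfolding R_def by simp
  have Q: "Q = R + of_real (1 - u) * (Q - P)" using assms(3) unfolding R_def by (simp add: algebra_simps)
  have eP: "1 - pa P \<phi> = u * k"
  proof -
    have "pa P \<phi> = ip P R" unfolding pa_ip R_def ..
    also from P have "ip P R = ip (R + of_real (- u) * (Q - P)) R" by (rule arg_cong)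
    also have "\<dots> = 1 - u * k" unfolding ip_lin RR k_def by simp
    finally show ?thesis by simp
  qed
  have eQ: "1 - pa Q \<phi> = (u - 1) * k"
  proof -
    have "pa Q \<phi> = ip Q R" unfolding pa_ip R_def ..
    also from Q have "ip Q R = ip (R + of_real (1 - u) * (Q - P)) R" by (rule arg_cong)
    also have "\<dots> = 1 - (u - 1) * k" unfolding ip_lin RR k_def by (simp add: algebra_simps)
    finally show ?thesis by simp
  qed
  have dP: "0 < u * k" using pa_lt1[OF assms(1), of \<phi>] eP by simp
  show "ln (1 - pa P \<phi>) - ln (1 - pa Q \<phi>) = ln (- u) - ln (1 - u)" if "u < 0"
  proof -
    have k: "0 < - k" using dP that by (simp add: zero_less_mult_iff)
    have e1: "1 - pa P \<phi> = (- u) * (- k)" using eP by simp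
    have e2: "1 - pa Q \<phi> = (1 - u) * (- k)" using eQ by (simp add: algebra_simps)
    have l1: "ln (1 - pa P \<phi>) = ln (- u) + ln (- k)" unfolding e1 by (rule ln_mult_pos) (use k that in auto)
    have l2: "ln (1 - pa Q \<phi>) = ln (1 - u) + ln (- k)" unfolding e2 by (rule ln_mult_pos) (use k that in auto)
    show ?thesis unfolding l1 l2 by simp
  qed
  show "ln (1 - pa P \<phi>) - ln (1 - pa Q \<phi>) = ln u - ln (u - 1)" if "1 < u"
  proof -
    have k: "0 < k" using dP that by (simp add: zero_less_mult_iff)
    then show ?thesis using eP eQ that by (simp add: ln_mult)
  qed
qed

lemma seg_identity:
  fixes P Q :: complex
  assumes PQ: "norm P < 1" "norm Q < 1"
  shows "((\<lambda>\<phi>. \<bar>pp Q \<phi> - pp P \<phi>\<bar>) has_integral 4 * klein_dist P Q) {0..2*pi}"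
proof (cases "P = Q")
  case True then show ?thesis by (simp add: klein_dist_def)
next
  case False
  obtain u1 u2 where u: "u1 < 0" "1 < u2" "norm (P + of_real u1 * (Q - P)) = 1"
      "norm (P + of_real u2 * (Q - P)) = 1"
    and roots: "\<And>u. norm (P + of_real u * (Q - P)) = 1 \<Longrightarrow> u = u1 \<or> u = u2"
    and kA: "klein_A P Q = P + of_real u1 * (Q - P)" and kB: "klein_B P Q = P + of_real u2 * (Q - P)"
    using klein_AB[OF PQ False] by blast
  define A where "A = P + of_real u1 * (Q - P)"
  define B where "B = P + of_real u2 * (Q - P)"
  obtain \<alpha> where al: "0 \<le> \<alpha>" "\<alpha> < 2*pi" "cis \<alpha> = A" using angle_exists[of A] u(3) A_def by blast
  obtain \<beta> where be: "0 \<le> \<beta>" "\<beta> < 2*pi" "cis \<beta> = B" using angle_exists[of B] u(4) B_def by blast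
  have AB: "A \<noteq> B"
  proof
    assume "A = B"
    then have "of_real u1 * (Q - P) = of_real u2 * (Q - P)" unfolding A_def B_def by simp
    then have "u1 = u2" using False by simp
    then show False using u by simp
  qed
  have albe: "\<alpha> \<noteq> \<beta>" using al be AB by auto
  define D where "D \<phi> = pp Q \<phi> - pp P \<phi>" for \<phi>
  define G where "G \<phi> = ln (1 - pa P \<phi>) - ln (1 - pa Q \<phi>)" for \<phi>
  have der: "(G has_real_derivative D x) (at x)" for x
  proof -
    have "(G has_real_derivative (- pp P x) - (- pp Q x)) (at x)"
      unfolding G_def by (intro DERIV_diff ln_deriv PQ)
    then show ?thesis by (simp add: D_def)
  qed
  have cD: "continuous_on S D" for S
  proof -
    have "isCont D x" for x
    proof -
      have c1: "isCont (\<lambda>\<phi>. pp Q \<phi>) x" by (rule DERIV_isCont[OF pp_deriv[OF PQ(2)]])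
      have c2: "isCont (\<lambda>\<phi>. pp P \<phi>) x" by (rule DERIV_isCont[OF pp_deriv[OF PQ(1)]])
      show ?thesis unfolding D_def using c1 c2 by (rule isCont_diff)
    qed
    then show ?thesis by (simp add: continuous_at_imp_continuous_on)
  qed
  have czero: "cis x = A \<or> cis x = B" if "D x = 0" for x
    using D_zero[OF PQ False _ roots, of x] that unfolding D_def A_def B_def by blast
  have zero: "x = \<alpha> \<or> x = \<beta>" if "0 \<le> x" "x < 2*pi" "D x = 0" for x
    using czero[OF that(3)] cis_inj[of x \<alpha>] cis_inj[of x \<beta>] al be that by auto
  define lo where "lo = min \<alpha> \<beta>"
  define hi where "hi = max \<alpha> \<beta>"
  have lohi: "0 \<le> lo" "lo < hi" "hi < 2*pi" "(lo = \<alpha> \<and> hi = \<beta>) \<or> (lo = \<beta> \<and> hi = \<alpha>)"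
    unfolding lo_def hi_def using al be albe by auto
  have I1: "D x \<noteq> 0" if "0 < x" "x < lo" for x using zero[of x] that lohi unfolding lo_def by auto
  have I2: "D x \<noteq> 0" if "lo < x" "x < hi" for x using zero[of x] that lohi unfolding lo_def hi_def by auto
  have I3: "D x \<noteq> 0" if "hi < x" "x < 2*pi" for x using zero[of x] that lohi unfolding hi_def by auto
  note s1 = seg_int[of 0 lo G D, OF lohi(1) der cD I1]
  note s2 = seg_int[of lo hi G D, OF _ der cD I2]
  note s3 = seg_int[of hi "2*pi" G D, OF _ der cD I3]
  have h1: "((\<lambda>x. \<bar>D x\<bar>) has_integral \<bar>G lo - G 0\<bar>) {0..lo}" using s1 by blast
  have h2: "((\<lambda>x. \<bar>D x\<bar>) has_integral \<bar>G hi - G lo\<bar>) {lo..hi}" using s2 lohi by auto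
  have h3: "((\<lambda>x. \<bar>D x\<bar>) has_integral \<bar>G (2*pi) - G hi\<bar>) {hi..2*pi}" using s3 lohi by auto
  have h12: "((\<lambda>x. \<bar>D x\<bar>) has_integral \<bar>G lo - G 0\<bar> + \<bar>G hi - G lo\<bar>) {0..hi}"
    by (rule has_integral_combine[OF lohi(1) _ h1 h2]) (use lohi in auto)
  have h123: "((\<lambda>x. \<bar>D x\<bar>) has_integral (\<bar>G lo - G 0\<bar> + \<bar>G hi - G lo\<bar>) + \<bar>G (2*pi) - G hi\<bar>) {0..2*pi}"
    by (rule has_integral_combine[OF _ _ h12 h3]) (use lohi in auto)
  have G2: "G (2*pi) = G 0" by (simp add: G_def pa_def)
  have D2: "D (2*pi) = D 0" by (simp add: D_def pp_def pa_def pb_def)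
  have sum: "\<bar>G lo - G 0\<bar> + \<bar>G hi - G lo\<bar> + \<bar>G (2*pi) - G hi\<bar> = 2 * \<bar>G hi - G lo\<bar>"
  proof (cases "D 0 = 0")
    case True
    have "0 = \<alpha> \<or> 0 = \<beta>" using zero[of 0] True by simp
    then have "lo = 0" using lohi unfolding lo_def by auto
    then show ?thesis unfolding G2 by (simp add: abs_minus_commute)
  next
    case False
    have r1: "((\<forall>x\<in>{0..lo}. 0 \<le> D x) \<and> G 0 \<le> G lo) \<or> ((\<forall>x\<in>{0..lo}. D x \<le> 0) \<and> G lo \<le> G 0)"
      using s1 by blast
    have r3: "((\<forall>x\<in>{hi..2*pi}. 0 \<le> D x) \<and> G hi \<le> G (2*pi)) \<or> ((\<forall>x\<in>{hi..2*pi}. D x \<le> 0) \<and> G (2*pi) \<le> G hi)"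
      using s3 lohi by auto
    have m0: "0 \<in> {0..lo}" using lohi by auto
    have m2: "2*pi \<in> {hi..2*pi}" using lohi by auto
    show ?thesis
    proof (cases "0 < D 0")
      case True
      have a: "G 0 \<le> G lo" using r1 m0 True by fastforce
      have b: "G hi \<le> G 0" using r3 m2 True D2 G2 by fastforce
      show ?thesis unfolding G2 using a b by (simp add: abs_if)
    next
      case F2: False
      then have neg: "D 0 < 0" using False by simp
      have a: "G lo \<le> G 0" using r1 m0 neg by fastforce
      have b: "G 0 \<le> G hi" using r3 m2 neg D2 G2 by fastforce
      show ?thesis unfolding G2 using a b by (simp add: abs_if)
    qed
  qed
  have Ga: "G \<alpha> = ln (- u1) - ln (1 - u1)"
    unfolding G_def by (rule G_at_root(1)[OF PQ _ u(1)]) (use al A_def in simp)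
  have Gb: "G \<beta> = ln u2 - ln (u2 - 1)"
    unfolding G_def by (rule G_at_root(2)[OF PQ _ u(2)]) (use be B_def in simp)
  have kd: "klein_dist P Q = (1/2) * ln (((1 - u1) / (- u1)) * (u2 / (u2 - 1)))"
    by (rule klein_dist_formula[OF PQ False u(1,2) kA kB])
  have "ln (((1 - u1) / (- u1)) * (u2 / (u2 - 1))) = ln ((1 - u1) / (- u1)) + ln (u2 / (u2 - 1))"
  proof -
    have q1: "0 < (1 - u1) / (- u1)" using u by (intro divide_pos_pos) auto
    have q2: "0 < u2 / (u2 - 1)" using u by (intro divide_pos_pos) auto
    show ?thesis by (rule ln_mult_pos[OF q1 q2])
  qed
  also have "\<dots> = (ln (1 - u1) - ln (- u1)) + (ln u2 - ln (u2 - 1))"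
  proof -
    have "ln ((1 - u1) / (- u1)) = ln (1 - u1) - ln (- u1)" by (rule ln_divide_pos) (use u in auto)
    moreover have "ln (u2 / (u2 - 1)) = ln u2 - ln (u2 - 1)" by (rule ln_divide_pos) (use u in auto)
    ultimately show ?thesis by simp
  qed
  finally have kd2: "klein_dist P Q = (1/2) * ((ln (1 - u1) - ln (- u1)) + (ln u2 - ln (u2 - 1)))"
    using kd by simp
  have p1: "ln (- u1) < ln (1 - u1)" using u by simp
  have p2: "ln (u2 - 1) < ln u2" using u by simp
  have "\<bar>G hi - G lo\<bar> = G \<beta> - G \<alpha>"
    using lohi(4) Ga Gb p1 p2 by (auto simp: abs_if)
  then have "2 * \<bar>G hi - G lo\<bar> = 4 * klein_dist P Q" using Ga Gb kd2 by simp
  then have "(\<bar>G lo - G 0\<bar> + \<bar>G hi - G lo\<bar>) + \<bar>G (2*pi) - G hi\<bar> = 4 * klein_dist P Q"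
    using sum by linarith
  then show ?thesis using h123 unfolding D_def by simp
qed

lemma tv_sub:
  fixes a :: "nat \<Rightarrow> real"
  shows "p \<le> q \<Longrightarrow> \<bar>a q - a p\<bar> \<le> (\<Sum>i\<in>{p..<q}. \<bar>a (Suc i) - a i\<bar>)"
proof (induction q)
  case 0 then show ?case by simp
next
  case (Suc q)
  show ?case
  proof (cases "p = Suc q")
    case True then show ?thesis by simp
  next
    case False
    then have pq: "p \<le> q" using Suc by simp
    have "\<bar>a (Suc q) - a p\<bar> \<le> \<bar>a q - a p\<bar> + \<bar>a (Suc q) - a q\<bar>" by linarith
    also have "\<dots> \<le> (\<Sum>i\<in>{p..<q}. \<bar>a (Suc i) - a i\<bar>) + \<bar>a (Suc q) - a q\<bar>" using Suc.IH[OF pq] by simp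
    also have "\<dots> = (\<Sum>i\<in>{p..<Suc q}. \<bar>a (Suc i) - a i\<bar>)" using pq by simp
    finally show ?thesis .
  qed
qed

lemma tv_closed:
  fixes a :: "nat \<Rightarrow> real"
  assumes "j \<le> n" "k \<le> n" "a n = a 0"
  shows "2 * (a j - a k) \<le> (\<Sum>i<n. \<bar>a (Suc i) - a i\<bar>)"
proof -
  define T where "T p q = (\<Sum>i\<in>{p..<q}. \<bar>a (Suc i) - a i\<bar>)" for p q
  have full: "(\<Sum>i<n. \<bar>a (Suc i) - a i\<bar>) = T 0 n" unfolding T_def by (simp add: atLeast0LessThan)
  have cat: "T p q + T q s = T p s" if "p \<le> q" "q \<le> s" for p q s
    unfolding T_def using sum.atLeastLessThan_concat[OF that] .
  have tv: "\<bar>a q - a p\<bar> \<le> T p q" if "p \<le> q" for p q unfolding T_def using tv_sub[OF that] .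
  show ?thesis
  proof (cases "j \<le> k")
    case True
    have "T 0 n = T 0 j + T j k + T k n" using cat[of 0 j k] cat[of 0 k n] True assms by simp
    moreover have "\<bar>a j - a 0\<bar> \<le> T 0 j" "\<bar>a k - a j\<bar> \<le> T j k" "\<bar>a n - a k\<bar> \<le> T k n"
      using tv[of 0 j] tv[of j k] tv[of k n] True assms(1,2) by auto
    ultimately show ?thesis using full assms(3) abs_ge_self[of "a j - a 0"] abs_ge_self[of "a n - a k"]
        abs_ge_minus_self[of "a k - a j"] unfolding mult_2 by linarith
  next
    case False
    have "T 0 n = T 0 k + T k j + T j n" using cat[of 0 k j] cat[of 0 j n] False assms by simp
    moreover have "\<bar>a k - a 0\<bar> \<le> T 0 k" "\<bar>a j - a k\<bar> \<le> T k j" "\<bar>a n - a j\<bar> \<le> T j n"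
      using tv[of 0 k] tv[of k j] tv[of j n] False assms(1,2) by auto
    ultimately show ?thesis using full assms(3) abs_ge_minus_self[of "a k - a 0"] abs_ge_self[of "a j - a k"]
        abs_ge_minus_self[of "a n - a j"] unfolding mult_2 by linarith
  qed
qed

lemma circle_loop:
  defines "c \<equiv> (\<lambda>t::real. cis (2 * pi * t))"
  shows "simple_path c" "pathfinish c = pathstart c" "path_image c = sphere 0 1"
proof -
  have pc: "path c" unfolding path_def c_def cis_conv_exp by (intro continuous_intros)
  have lf: "loop_free c" unfolding loop_free_def
  proof (intro ballI impI)
    fix x y :: real assume x: "x \<in> {0..1}" and y: "y \<in> {0..1}" and e: "c x = c y"
    have red: "\<And>s. s \<in> {0..1} \<Longrightarrow> s \<noteq> 1 \<Longrightarrow> 0 \<le> 2 * pi * s \<and> 2 * pi * s < 2 * pi" by auto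
    have c1: "c 1 = cis 0" unfolding c_def by simp
    show "x = y \<or> x = 0 \<and> y = 1 \<or> x = 1 \<and> y = 0"
    proof (cases "x = 1")
      case True
      show ?thesis
      proof (cases "y = 1")
        case True then show ?thesis using \<open>x = 1\<close> by simp
      next
        case False
        have "cis (2 * pi * y) = cis 0" using e c1 \<open>x = 1\<close> unfolding c_def by simp
        then have "2 * pi * y = 0" using cis_inj[of "2*pi*y" 0] red[OF y False] by simp
        then show ?thesis using \<open>x = 1\<close> by simp
      qed
    next
      case xn: False
      show ?thesis
      proof (cases "y = 1")
        case True
        have "cis (2 * pi * x) = cis 0" using e c1 True unfolding c_def by simp
        then have "2 * pi * x = 0" using cis_inj[of "2*pi*x" 0] red[OF x xn] by simp
        then show ?thesis using True by simp
      next
        case False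
        have "cis (2 * pi * x) = cis (2 * pi * y)" using e unfolding c_def by simp
        then have "2 * pi * x = 2 * pi * y" using cis_inj red[OF x xn] red[OF y False] by blast
        then show ?thesis by simp
      qed
    qed
  qed
  show "simple_path c" unfolding simple_path_def using pc lf by simp
  show "pathfinish c = pathstart c" unfolding pathfinish_def pathstart_def c_def by simp
  show "path_image c = sphere 0 1"
  proof
    show "path_image c \<subseteq> sphere 0 1" unfolding path_image_def c_def by auto
    show "sphere 0 1 \<subseteq> path_image c"
    proof
      fix z :: complex assume "z \<in> sphere 0 1"
      then have "norm z = 1" by simp
      then obtain \<theta> where th: "0 \<le> \<theta>" "\<theta> < 2*pi" "cis \<theta> = z" using angle_exists by blast
      have "\<theta> / (2 * pi) \<in> {0..1}" using th by auto
      moreover have "c (\<theta> / (2 * pi)) = z" unfolding c_def using th by simp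
      ultimately show "z \<in> path_image c" unfolding path_image_def by force
    qed
  qed
qed

lemma exists_loop:
  fixes K :: "complex set"
  assumes "compact K" "convex K" "interior K \<noteq> {}"
  shows "\<exists>g. simple_path g \<and> pathfinish g = pathstart g \<and> path_image g = frontier K"
proof -
  have "rel_frontier (cball (0::complex) 1) homeomorphic rel_frontier K"
    by (rule homeomorphic_rel_frontiers_convex_bounded_sets)
       (auto simp: compact_imp_bounded aff_dim_nonempty_interior assms)
  then have "sphere (0::complex) 1 homeomorphic frontier K"
    by (simp add: rel_frontier_nonempty_interior assms)
  then obtain h k where hk: "homeomorphism (sphere (0::complex) 1) (frontier K) h k"
    unfolding homeomorphic_def by blast
  define c where "c = (\<lambda>t::real. cis (2 * pi * t))"
  note cl = circle_loop[folded c_def]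
  have sp: "simple_path (h \<circ> c)"
  proof (rule simple_path_continuous_image[OF cl(1)])
    show "continuous_on (path_image c) h" using hk cl(3) unfolding homeomorphism_def by simp
    show "inj_on h (path_image c)" using hk cl(3) unfolding homeomorphism_def by (metis inj_on_inverseI)
  qed
  have "pathfinish (h \<circ> c) = pathstart (h \<circ> c)" using cl(2) unfolding pathfinish_def pathstart_def by simp
  moreover have "path_image (h \<circ> c) = frontier K"
  proof -
    have "path_image (h \<circ> c) = h ` path_image c" unfolding path_image_def by (rule image_comp[symmetric])
    then show ?thesis using hk cl(3) unfolding homeomorphism_def by simp
  qed
  ultimately show ?thesis using sp by blast
qed

lemma K_radius:
  fixes K :: "complex set"
  assumes "K \<subseteq> ball 0 1" "compact K" "K \<noteq> {}"
  shows "\<exists>r. 0 \<le> r \<and> r < 1 \<and> (\<forall>X\<in>K. norm X \<le> r)"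
proof -
  obtain X0 where X0: "X0 \<in> K" "\<forall>Y\<in>K. norm Y \<le> norm X0"
    using continuous_attains_sup[OF assms(2,3) continuous_on_norm_id] by blast
  have "norm X0 < 1" using X0 assms(1) by auto
  then show ?thesis using X0 by (intro exI[of _ "norm X0"]) auto
qed

lemma width_lip:
  fixes K :: "complex set"
  assumes K: "K \<subseteq> ball 0 1" "compact K" "K \<noteq> {}" and r: "0 \<le> r" "r < 1" "\<forall>X\<in>K. norm X \<le> r"
  shows "dist (width_w K \<phi>) (width_w K \<psi>) \<le> (2 * (3 / (1 - r)\<^sup>2)) * dist \<phi> \<psi>"
proof -
  define L where "L = 3 / (1 - r)\<^sup>2"
  define M where "M = L * \<bar>\<phi> - \<psi>\<bar>"
  obtain X1 X2 where X: "X1 \<in> K" "X2 \<in> K" "\<forall>X\<in>K. pp X \<phi> \<le> pp X1 \<phi> \<and> pp X2 \<phi> \<le> pp X \<phi>"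
      "width_w K \<phi> = pp X1 \<phi> - pp X2 \<phi>"
    using width_char[OF K, of \<phi>] by blast
  obtain Y1 Y2 where Y: "Y1 \<in> K" "Y2 \<in> K" "\<forall>X\<in>K. pp X \<psi> \<le> pp Y1 \<psi> \<and> pp Y2 \<psi> \<le> pp X \<psi>"
      "width_w K \<psi> = pp Y1 \<psi> - pp Y2 \<psi>"
    using width_char[OF K, of \<psi>] by blast
  have l: "\<bar>pp X \<phi> - pp X \<psi>\<bar> \<le> M" if "X \<in> K" for X
    unfolding M_def L_def using pp_lip_phi[of X r \<phi> \<psi>] r that by auto
  have a1: "pp X1 \<psi> \<le> pp Y1 \<psi>" "pp Y2 \<psi> \<le> pp X2 \<psi>" using X Y by auto
  have a2: "pp Y1 \<phi> \<le> pp X1 \<phi>" "pp X2 \<phi> \<le> pp Y2 \<phi>" using X Y by auto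
  have b: "\<bar>pp X1 \<phi> - pp X1 \<psi>\<bar> \<le> M" "\<bar>pp X2 \<phi> - pp X2 \<psi>\<bar> \<le> M"
    "\<bar>pp Y1 \<phi> - pp Y1 \<psi>\<bar> \<le> M" "\<bar>pp Y2 \<phi> - pp Y2 \<psi>\<bar> \<le> M" using l X Y by auto
  have "\<bar>width_w K \<phi> - width_w K \<psi>\<bar> \<le> M + M"
    unfolding X(4) Y(4) using a1 a2 b by (simp add: abs_le_iff)
  then show ?thesis unfolding dist_real_def M_def L_def by simp
qed

lemma width_integrable:
  fixes K :: "complex set"
  assumes K: "K \<subseteq> ball 0 1" "compact K" "K \<noteq> {}"
  shows "width_w K integrable_on {0..2*pi}"
proof -
  obtain r where r: "0 \<le> r" "r < 1" "\<forall>X\<in>K. norm X \<le> r" using K_radius[OF K] by blast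
  have "(2 * (3 / (1 - r)\<^sup>2))-lipschitz_on {0..2*pi} (width_w K)"
    by (rule lipschitz_onI) (use width_lip[OF K r] r in auto)
  then have "continuous_on {0..2*pi} (width_w K)" by (rule lipschitz_on_continuous_on)
  then show ?thesis by (rule integrable_continuous_interval)
qed


lemma partition_integral:
  fixes g :: "real \<Rightarrow> complex" and t :: "nat \<Rightarrow> real"
  assumes gB: "\<And>s. s \<in> {0..1} \<Longrightarrow> norm (g s) < 1"
    and t: "t 0 = 0" "t n = 1" "\<forall>i<n. t i \<le> t (Suc i)"
  shows "((\<lambda>\<phi>. \<Sum>i<n. \<bar>pp (g (t (Suc i))) \<phi> - pp (g (t i)) \<phi>\<bar>) has_integral
           4 * (\<Sum>i<n. klein_dist (g (t i)) (g (t (Suc i))))) {0..2*pi}"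
proof -
  have tin: "t i \<in> {0..1}" if "i \<le> n" for i
    using part_mono[OF t(3), of 0 i] part_mono[OF t(3), of i n] that t(1,2) by auto
  have "((\<lambda>\<phi>. \<Sum>i<n. \<bar>pp (g (t (Suc i))) \<phi> - pp (g (t i)) \<phi>\<bar>) has_integral
           (\<Sum>i<n. 4 * klein_dist (g (t i)) (g (t (Suc i))))) {0..2*pi}"
  proof (rule has_integral_sum)
    fix i assume "i \<in> {..<n}"
    then have "i \<le> n" "Suc i \<le> n" by auto
    then show "((\<lambda>\<phi>. \<bar>pp (g (t (Suc i))) \<phi> - pp (g (t i)) \<phi>\<bar>) has_integral
           4 * klein_dist (g (t i)) (g (t (Suc i)))) {0..2*pi}"
      by (intro seg_identity gB tin)
  qed simp
  then show ?thesis by (simp add: sum_distrib_left)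
qed

lemma upper_pw:
  fixes K :: "complex set" and g :: "real \<Rightarrow> complex" and t :: "nat \<Rightarrow> real"
  assumes K: "K \<subseteq> ball 0 1" "compact K" "convex K" "interior K \<noteq> {}"
    and g: "simple_path g" "path_image g = frontier K"
    and t: "t 0 = 0" "t n = 1" "\<forall>i<n. t i \<le> t (Suc i)"
  shows "(\<Sum>i<n. \<bar>pp (g (t (Suc i))) \<phi> - pp (g (t i)) \<phi>\<bar>) \<le> 2 * width_w K \<phi>"
proof -
  have Kne: "K \<noteq> {}" using K(4) interior_subset by blast
  have fK: "frontier K \<subseteq> K" using K(2) by (simp add: compact_imp_closed frontier_subset_closed)
  have gF: "g s \<in> frontier K" if "s \<in> {0..1}" for s using g(2) that unfolding path_image_def by auto
  have gK: "g s \<in> K" if "s \<in> {0..1}" for s using gF[OF that] fK by auto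
  have gcont: "continuous_on {0..1} g" using g(1) unfolding simple_path_def path_def by simp
  have ginj: "x = y" if "x \<in> {0<..<1}" "y \<in> {0<..<1}" "g x = g y" for x y
    using g(1) that unfolding simple_path_def loop_free_def by force
  obtain X1 X2 where X: "X1 \<in> K" "X2 \<in> K" "\<forall>X\<in>K. pp X \<phi> \<le> pp X1 \<phi> \<and> pp X2 \<phi> \<le> pp X \<phi>"
      "width_w K \<phi> = pp X1 \<phi> - pp X2 \<phi>"
    using width_char[OF K(1,2) Kne, of \<phi>] by blast
  define f where "f s = pp (g s) \<phi>" for s
  have cf: "continuous_on {0..1} f" unfolding f_def
    by (rule continuous_on_compose2[OF pp_cont_on[OF K(1)] gcont]) (use gK in auto)
  have "(\<Sum>i<n. \<bar>f (t (Suc i)) - f (t i)\<bar>) \<le> 2 * (pp X1 \<phi> - pp X2 \<phi>)"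
  proof (rule tv_bound[OF cf t])
    show "\<forall>s\<in>{0..1}. pp X2 \<phi> \<le> f s \<and> f s \<le> pp X1 \<phi>" unfolding f_def using X gK by auto
    fix c s1 s2 s3 :: real
    assume s: "0 < s1" "s1 < s2" "s2 < s3" "s3 < 1" "f s1 = c" "f s2 = c" "f s3 = c" "pp X2 \<phi> < c" "c < pp X1 \<phi>"
    have i: "s1 \<in> {0<..<1}" "s2 \<in> {0<..<1}" "s3 \<in> {0<..<1}" using s by auto
    have d: "g s1 \<noteq> g s2" "g s1 \<noteq> g s3" "g s2 \<noteq> g s3"
      using ginj[OF i(1) i(2)] ginj[OF i(1) i(3)] ginj[OF i(2) i(3)] s(2,3) by auto
    show False
      by (rule at_most_two[OF K X(2) s(8) X(1) s(9), of "g s1" "g s2" "g s3"])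
         (use gF i s d f_def in auto)
  qed
  then show ?thesis unfolding f_def X(4) .
qed

lemma upper_bound:
  fixes K :: "complex set" and g :: "real \<Rightarrow> complex" and t :: "nat \<Rightarrow> real"
  assumes K: "K \<subseteq> ball 0 1" "compact K" "convex K" "interior K \<noteq> {}"
    and g: "simple_path g" "path_image g = frontier K"
    and t: "t 0 = 0" "t n = 1" "\<forall>i<n. t i \<le> t (Suc i)"
  shows "(\<Sum>i<n. klein_dist (g (t i)) (g (t (Suc i)))) \<le> (1/2) * integral {0..2*pi} (width_w K)"
proof -
  have Kne: "K \<noteq> {}" using K(4) interior_subset by blast
  have fK: "frontier K \<subseteq> K" using K(2) by (simp add: compact_imp_closed frontier_subset_closed)
  have gB: "norm (g s) < 1" if "s \<in> {0..1}" for s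
  proof -
    have "g s \<in> frontier K" using g(2) that unfolding path_image_def by blast
    then have "g s \<in> ball 0 1" using fK K(1) by blast
    then show ?thesis by simp
  qed
  have Wi: "((\<lambda>\<phi>. 2 * width_w K \<phi>) has_integral 2 * integral {0..2*pi} (width_w K)) {0..2*pi}"
    using has_integral_mult_right[OF integrable_integral[OF width_integrable[OF K(1,2) Kne]], of 2] .
  have "4 * (\<Sum>i<n. klein_dist (g (t i)) (g (t (Suc i)))) \<le> 2 * integral {0..2*pi} (width_w K)"
  proof (rule has_integral_le[OF _ Wi])
    show "((\<lambda>\<phi>. \<Sum>i<n. \<bar>pp (g (t (Suc i))) \<phi> - pp (g (t i)) \<phi>\<bar>) has_integral
           4 * (\<Sum>i<n. klein_dist (g (t i)) (g (t (Suc i))))) {0..2*pi}"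
      by (rule partition_integral[OF _ t]) (rule gB)
    fix x show "(\<Sum>i<n. \<bar>pp (g (t (Suc i))) x - pp (g (t i)) x\<bar>) \<le> 2 * width_w K x"
      by (rule upper_pw[OF K g t])
  qed
  then show ?thesis by simp
qed

lemma lower_bound:
  fixes K :: "complex set" and g :: "real \<Rightarrow> complex"
  assumes K: "K \<subseteq> ball 0 1" "compact K" "convex K" "interior K \<noteq> {}"
    and g: "simple_path g" "pathfinish g = pathstart g" "path_image g = frontier K"
    and e: "0 < e"
  shows "\<exists>n t. t 0 = 0 \<and> t n = 1 \<and> (\<forall>i<n. t i \<le> t (Suc i)) \<and>
      (1/2) * integral {0..2*pi} (width_w K) - e < (\<Sum>i<n. klein_dist (g (t i)) (g (t (Suc i))))"
proof -
  have Kne: "K \<noteq> {}" using K(4) interior_subset by blast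
  have fK: "frontier K \<subseteq> K" using K(2) by (simp add: compact_imp_closed frontier_subset_closed)
  obtain r where r: "0 \<le> r" "r < 1" "\<forall>X\<in>K. norm X \<le> r" using K_radius[OF K(1,2) Kne] by blast
  define C where "C = 3 / (1 - r)\<^sup>2"
  have C0: "0 \<le> C" unfolding C_def by simp
  define \<delta> where "\<delta> = e / (8 * C + 1)"
  have d0: "0 < \<delta>" unfolding \<delta>_def using e C0 by simp
  have d8: "8 * (C * \<delta>) < e"
  proof -
    have "\<delta> * (8 * C + 1) = e" unfolding \<delta>_def using C0 by simp
    then have "8 * (C * \<delta>) = e - \<delta>" by (simp add: algebra_simps)
    then show ?thesis using d0 by simp
  qed
  have gF: "g s \<in> frontier K" if "s \<in> {0..1}" for s using g(3) that unfolding path_image_def by blast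
  have gK: "g s \<in> K" if "s \<in> {0..1}" for s using gF[OF that] fK by blast
  have gr: "norm (g s) \<le> r" if "s \<in> {0..1}" for s using gK[OF that] r by blast
  have gB: "norm (g s) < 1" if "s \<in> {0..1}" for s using gr[OF that] r by linarith
  have gcont: "continuous_on {0..1} g" using g(1) unfolding simple_path_def path_def by simp
  have g01: "g 1 = g 0" using g(2) unfolding pathfinish_def pathstart_def .
  have "uniformly_continuous_on {0..1} g" by (rule compact_uniformly_continuous[OF gcont]) simp
  then obtain \<eta> where eta: "0 < \<eta>" "\<forall>x\<in>{0..1}. \<forall>x'\<in>{0..1}. dist x' x < \<eta> \<longrightarrow> dist (g x') (g x) < \<delta>"
    unfolding uniformly_continuous_on_def using d0 by blast
  obtain n :: nat where n: "1 / \<eta> < real n" using reals_Archimedean2 by blast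
  have "0 < 1 / \<eta>" using eta by simp
  then have npos: "0 < real n" using n by linarith
  have n1: "1 / real n < \<eta>" using n npos eta by (simp add: field_simps)
  define t where "t i = real i / real n" for i
  have t0: "t 0 = 0" and tn: "t n = 1" unfolding t_def using npos by auto
  have tm: "\<forall>i<n. t i \<le> t (Suc i)" unfolding t_def using npos by (auto intro: divide_right_mono)
  have tin: "t i \<in> {0..1}" if "i \<le> n" for i unfolding t_def using npos that by (auto simp: field_simps)
  have near: "\<exists>j\<le>n. dist (g (t j)) (g s) < \<delta>" if s: "s \<in> {0..1}" for s
  proof -
    define j where "j = nat \<lfloor>s * real n\<rfloor>"
    have sn0: "0 \<le> s * real n" using s npos by simp
    have jr: "real j = of_int \<lfloor>s * real n\<rfloor>" unfolding j_def using sn0 by simp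
    have f1: "of_int \<lfloor>s * real n\<rfloor> \<le> s * real n" by (rule of_int_floor_le)
    have f2: "s * real n < of_int \<lfloor>s * real n\<rfloor> + 1" by (rule real_of_int_floor_add_one_gt)
    have "s * real n \<le> real n" using s npos by (simp add: mult_left_le_one_le)
    then have jn: "j \<le> n" using jr f1 by linarith
    have "t j \<le> s" unfolding t_def using jr f1 npos by (simp add: field_simps)
    moreover have "s - t j < 1 / real n"
    proof -
      have lt: "s * real n - real j < 1" using jr f2 by linarith
      have "s - t j = (s * real n - real j) / real n" unfolding t_def using npos by (simp add: field_simps)
      also have "\<dots> < 1 / real n" using lt npos by (intro divide_strict_right_mono) auto
      finally show ?thesis .
    qed
    ultimately have "dist (t j) s < \<eta>" using n1 by (simp add: dist_real_def)
    then have "dist (g (t j)) (g s) < \<delta>" using eta(2) tin[OF jn] s by blast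
    then show ?thesis using jn by blast
  qed
  have pw: "2 * width_w K \<phi> - 4 * (C * \<delta>) \<le> (\<Sum>i<n. \<bar>pp (g (t (Suc i))) \<phi> - pp (g (t i)) \<phi>\<bar>)" for \<phi>
  proof -
    obtain X1 X2 where X: "X1 \<in> K" "X2 \<in> K" "width_w K \<phi> = pp X1 \<phi> - pp X2 \<phi>"
      using width_char[OF K(1,2) Kne, of \<phi>] by blast
    obtain Y1 where Y1: "Y1 \<in> frontier K" "pp Y1 \<phi> = pp X1 \<phi>" using frontier_level[OF K(1,2) X(1)] by blast
    obtain Y2 where Y2: "Y2 \<in> frontier K" "pp Y2 \<phi> = pp X2 \<phi>" using frontier_level[OF K(1,2) X(2)] by blast
    have "Y1 \<in> g ` {0..1}" using Y1(1) g(3) unfolding path_image_def by simp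
    then obtain s1 where s1: "s1 \<in> {0..1}" "g s1 = Y1" by (metis imageE)
    have "Y2 \<in> g ` {0..1}" using Y2(1) g(3) unfolding path_image_def by simp
    then obtain s2 where s2: "s2 \<in> {0..1}" "g s2 = Y2" by (metis imageE)
    obtain j1 where j1: "j1 \<le> n" "dist (g (t j1)) (g s1) < \<delta>" using near[OF s1(1)] by blast
    obtain j2 where j2: "j2 \<le> n" "dist (g (t j2)) (g s2) < \<delta>" using near[OF s2(1)] by blast
    have close: "\<bar>pp (g (t j)) \<phi> - pp (g s) \<phi>\<bar> \<le> C * \<delta>"
      if "j \<le> n" "s \<in> {0..1}" "dist (g (t j)) (g s) < \<delta>" for j s
    proof -
      have "\<bar>pp (g (t j)) \<phi> - pp (g s) \<phi>\<bar> \<le> 3 * norm (g (t j) - g s) / (1 - r)\<^sup>2"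
        by (rule pp_lip[OF gr[OF tin[OF that(1)]] gr[OF that(2)] r(2)])
      also have "\<dots> = C * norm (g (t j) - g s)" unfolding C_def by simp
      also have "\<dots> \<le> C * \<delta>" using that(3) C0 by (intro mult_left_mono) (auto simp: dist_norm)
      finally show ?thesis .
    qed
    have c1: "\<bar>pp (g (t j1)) \<phi> - pp X1 \<phi>\<bar> \<le> C * \<delta>" using close[OF j1(1) s1(1) j1(2)] s1 Y1 by simp
    have c2: "\<bar>pp (g (t j2)) \<phi> - pp X2 \<phi>\<bar> \<le> C * \<delta>" using close[OF j2(1) s2(1) j2(2)] s2 Y2 by simp
    define a where "a i = pp (g (t i)) \<phi>" for i
    have an: "a n = a 0" unfolding a_def using tn t0 g01 by simp
    have "2 * (a j1 - a j2) \<le> (\<Sum>i<n. \<bar>a (Suc i) - a i\<bar>)" by (rule tv_closed[OF j1(1) j2(1) an])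
    then have "(a j1 - a j2) + (a j1 - a j2) \<le> (\<Sum>i<n. \<bar>pp (g (t (Suc i))) \<phi> - pp (g (t i)) \<phi>\<bar>)"
      unfolding a_def by simp
    moreover have "pp X1 \<phi> - C * \<delta> \<le> a j1" "a j2 \<le> pp X2 \<phi> + C * \<delta>" using c1 c2 unfolding a_def by auto
    moreover have "2 * (pp X1 \<phi> - pp X2 \<phi>) - 4 * (C * \<delta>) =
        (pp X1 \<phi> - pp X2 \<phi>) + (pp X1 \<phi> - pp X2 \<phi>) - (C * \<delta> + C * \<delta> + C * \<delta> + C * \<delta>)"
      by (simp add: algebra_simps)
    ultimately show ?thesis unfolding X(3) by linarith
  qed
  define IW where "IW = integral {0..2*pi} (width_w K)"
  have Wi: "(width_w K has_integral IW) {0..2*pi}"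
    unfolding IW_def by (rule integrable_integral[OF width_integrable[OF K(1,2) Kne]])
  have Lo: "((\<lambda>\<phi>. 2 * width_w K \<phi> - 4 * (C * \<delta>)) has_integral 2 * IW - (2 * pi) * (4 * (C * \<delta>))) {0..2*pi}"
  proof -
    have a: "((\<lambda>\<phi>. 2 * width_w K \<phi>) has_integral 2 * IW) {0..2*pi}" using has_integral_mult_right[OF Wi] .
    have b: "((\<lambda>\<phi>. 4 * (C * \<delta>)) has_integral (2 * pi) * (4 * (C * \<delta>))) {0..2*pi}"
      using has_integral_const_real[of "4 * (C * \<delta>)" 0 "2*pi"] by simp
    show ?thesis using has_integral_diff[OF a b] .
  qed
  define S where "S = (\<Sum>i<n. klein_dist (g (t i)) (g (t (Suc i))))"
  have PI: "((\<lambda>\<phi>. \<Sum>i<n. \<bar>pp (g (t (Suc i))) \<phi> - pp (g (t i)) \<phi>\<bar>) has_integral 4 * S) {0..2*pi}"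
    unfolding S_def by (rule partition_integral[OF _ t0 tn tm]) (rule gB)
  have "2 * IW - (2 * pi) * (4 * (C * \<delta>)) \<le> 4 * S"
    by (rule has_integral_le[OF Lo PI]) (rule pw)
  moreover have "(2 * pi) * (4 * (C * \<delta>)) \<le> 8 * (4 * (C * \<delta>))"
    using pi_less_4 C0 d0 by (intro mult_right_mono) auto
  ultimately have "(1/2) * IW - e < S" using d8 by linarith
  then show ?thesis unfolding IW_def S_def using t0 tn tm by blast
qed

theorem theorem4p1:
  fixes K :: "complex set"
  assumes "K \<subseteq> ball 0 1" and "compact K" and "convex K" and "interior K \<noteq> {}"
  shows "width_w K integrable_on {0..2*pi}
    \<and> (\<exists>g. simple_path g \<and> pathfinish g = pathstart g \<and> path_image g = frontier K)
    \<and> (\<forall>g. simple_path g \<and> pathfinish g = pathstart g \<and> path_image g = frontier K \<longrightarrow>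
          klein_length g = ereal ((1/2) * integral {0..2*pi} (width_w K)))"
proof -
  note K = assms
  have Kne: "K \<noteq> {}" using K(4) interior_subset by blast
  have Wint: "width_w K integrable_on {0..2*pi}" by (rule width_integrable[OF K(1,2) Kne])
  have ex: "\<exists>g. simple_path g \<and> pathfinish g = pathstart g \<and> path_image g = frontier K"
    by (rule exists_loop[OF K(2,3,4)])
  have main: "klein_length g = ereal ((1/2) * integral {0..2*pi} (width_w K))"
    if g: "simple_path g" "pathfinish g = pathstart g" "path_image g = frontier K" for g
  proof -
    define V where "V = (1/2) * integral {0..2*pi} (width_w K)"
    have le: "klein_length g \<le> ereal V"
      unfolding klein_length_def
    proof (rule SUP_least)
      fix x assume "x \<in> {(n::nat, t::nat \<Rightarrow> real). t 0 = 0 \<and> t n = 1 \<and> (\<forall>i<n. t i \<le> t (Suc i))}"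
      then obtain n t where x: "x = (n, t)" "t 0 = 0" "t n = 1" "\<forall>i<n. t i \<le> t (Suc i)" by blast
      have "(\<Sum>i<n. klein_dist (g (t i)) (g (t (Suc i)))) \<le> V"
        unfolding V_def by (rule upper_bound[OF K g(1,3) x(2,3,4)])
      then show "(case x of (n, t) \<Rightarrow> ereal (\<Sum>i<n. klein_dist (g (t i)) (g (t (Suc i))))) \<le> ereal V"
        using x(1) by simp
    qed
    have ge: "ereal V \<le> klein_length g"
    proof (rule ereal_le_epsilon2)
      fix e :: real assume e: "0 < e"
      obtain n t where nt: "t 0 = 0" "t n = 1" "\<forall>i<n. t i \<le> t (Suc i)"
        "V - e < (\<Sum>i<n. klein_dist (g (t i)) (g (t (Suc i))))"
        using lower_bound[OF K g e] unfolding V_def by blast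
      have "ereal (\<Sum>i<n. klein_dist (g (t i)) (g (t (Suc i)))) \<le> klein_length g"
        unfolding klein_length_def
        by (rule SUP_upper2[where i="(n, t)"]) (use nt in auto)
      moreover have "ereal V \<le> ereal (\<Sum>i<n. klein_dist (g (t i)) (g (t (Suc i)))) + ereal e"
        using nt(4) by simp
      ultimately show "ereal V \<le> klein_length g + ereal e"
        by (meson add_right_mono order_trans)
    qed
    show ?thesis using le ge unfolding V_def by (rule antisym)
  qed
  show ?thesis using Wint ex main by blast
qed

end
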